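(* For any integers $n\ge2$, $k\ge1$, $D\ge1$ and any $\delta\in(0,1)$, any $\mathrm{MEQ}_{k,n}$ decision tree of depth $D$ computing a function $f:(\{0,1\}^n)^k\to S$ can be implemented by a quantum $k$-party $\mathsf{SMP}$ protocol (with no shared randomness and no shared entanglement) that uses $O(k(\log D+\log(1/\delta))\log n)$ qubits of communication in total and, on every input, outputs $f(x_1,\dots,x_k)$ with error probability at most $\delta$.
   Context: Quantum $k$-party simultaneous message-passing ($\mathsf{SMP}$) model: $k$ players, player $\ell$ holding private input $x_\ell\in\{0,1\}^n$, each send one quantum message (computed from its own input only; no shared randomness or entanglement) to a referee who then outputs a value; the communication cost is the maximum total number of qubits sent. The modified equality query is $\mathrm{MEQ}_{k,n}(i,j,y,z)=1$ if $x_i\oplus y=x_j\oplus z$ and $0$ otherwise ($\oplus$ = bitwise XOR). An $\mathrm{MEQ}_{k,n}$ decision tree is a rooted binary tree in which every node has 0 or 2 children; each internal node is labeled by a 4-tuple $(i,j,y,z)$ with $i,j\in[k]$ and fixed strings $y,z\in\{0,1\}^n$, and each leaf is labeled by an element of an output set $S$. On input $(x_1,\dots,x_k)$ it is evaluated starting at the root, moving to the right child if $x_i\oplus y=x_j\oplus z$ and to the left child otherwise, and outputting the label of the leaf reached. Its depth is the maximal number of internal nodes on a root-to-leaf path. It computes $f$ if its output equals $f(x_1,\dots,x_k)$ for all inputs. *)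

theory Defs
  imports Complex_Main "HOL-Library.FuncSet"
begin

type_synonym bits = "bool list"

definition bitstrings :: "nat \<Rightarrow> bits set" where
  "bitstrings n = {v. length v = n}"

definition xor_bits :: "bits \<Rightarrow> bits \<Rightarrow> bits" where
  "xor_bits u v = map2 (\<noteq>) u v"

definition smp_inputs :: "nat \<Rightarrow> nat \<Rightarrow> (nat \<Rightarrow> bits) set" where
  "smp_inputs k n = PiE {..<k} (\<lambda>_. bitstrings n)"

text \<open>Node i j y z left right: go right if x_i xor y = x_j xor z, else left.\<close>
datatype 's meq_tree = Leaf 's | Node nat nat bits bits "'s meq_tree" "'s meq_tree"

fun meq_wf :: "nat \<Rightarrow> nat \<Rightarrow> 's meq_tree \<Rightarrow> bool" where
  "meq_wf k n (Leaf s) = True"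
| "meq_wf k n (Node i j y z l r) =
     (i < k \<and> j < k \<and> length y = n \<and> length z = n \<and> meq_wf k n l \<and> meq_wf k n r)"

fun meq_depth :: "'s meq_tree \<Rightarrow> nat" where
  "meq_depth (Leaf s) = 0"
| "meq_depth (Node i j y z l r) = Suc (max (meq_depth l) (meq_depth r))"

fun meq_eval :: "'s meq_tree \<Rightarrow> (nat \<Rightarrow> bits) \<Rightarrow> 's" where
  "meq_eval (Leaf s) x = s"
| "meq_eval (Node i j y z l r) x =
     (if xor_bits (x i) y = xor_bits (x j) z then meq_eval r x else meq_eval l x)"

definition computes_tree :: "nat \<Rightarrow> nat \<Rightarrow> 's meq_tree \<Rightarrow> ((nat \<Rightarrow> bits) \<Rightarrow> 's) \<Rightarrow> bool" where
  "computes_tree k n T f \<longleftrightarrow> (\<forall>x\<in>smp_inputs k n. meq_eval T x = f x)"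

text \<open>Operators on the Hilbert space with orthonormal basis indexed by a finite set A,
  given by their matrix entries.\<close>

definition psd_on :: "'i set \<Rightarrow> ('i \<Rightarrow> 'i \<Rightarrow> complex) \<Rightarrow> bool" where
  "psd_on A M \<longleftrightarrow>
     (\<forall>a\<in>A. \<forall>b\<in>A. M a b = cnj (M b a)) \<and>
     (\<forall>v :: 'i \<Rightarrow> complex. 0 \<le> Re (\<Sum>a\<in>A. \<Sum>b\<in>A. cnj (v a) * M a b * v b))"

definition density_on :: "'i set \<Rightarrow> ('i \<Rightarrow> 'i \<Rightarrow> complex) \<Rightarrow> bool" where
  "density_on A \<rho> \<longleftrightarrow> psd_on A \<rho> \<and> (\<Sum>a\<in>A. \<rho> a a) = 1"

definition povm_on :: "'i set \<Rightarrow> ('s \<Rightarrow> 'i \<Rightarrow> 'i \<Rightarrow> complex) \<Rightarrow> bool" where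
  "povm_on A E \<longleftrightarrow>
     (\<forall>s. psd_on A (E s)) \<and>
     (\<exists>F. finite F \<and> (\<forall>s. s \<notin> F \<longrightarrow> (\<forall>a\<in>A. \<forall>b\<in>A. E s a b = 0)) \<and>
          (\<forall>a\<in>A. \<forall>b\<in>A. (\<Sum>s\<in>F. E s a b) = (if a = b then 1 else 0)))"

text \<open>Player l sends a (possibly mixed) state on qubits l qubits, i.e. a density operator
  on the space with basis {..<2^(qubits l)}; it depends only on the player's own input.
  The referee applies a POVM to the tensor product of all messages.\<close>
record 's smp_protocol =
  qubits :: "nat \<Rightarrow> nat"
  msg :: "nat \<Rightarrow> bits \<Rightarrow> nat \<Rightarrow> nat \<Rightarrow> complex"
  referee :: "'s \<Rightarrow> (nat \<Rightarrow> nat) \<Rightarrow> (nat \<Rightarrow> nat) \<Rightarrow> complex"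

definition joint_space :: "nat \<Rightarrow> 's smp_protocol \<Rightarrow> (nat \<Rightarrow> nat) set" where
  "joint_space k P = PiE {..<k} (\<lambda>l. {..<2 ^ qubits P l})"

definition joint_state :: "nat \<Rightarrow> 's smp_protocol \<Rightarrow> (nat \<Rightarrow> bits) \<Rightarrow> (nat \<Rightarrow> nat) \<Rightarrow> (nat \<Rightarrow> nat) \<Rightarrow> complex" where
  "joint_state k P x a b = (\<Prod>l<k. msg P l (x l) (a l) (b l))"

definition valid_smp :: "nat \<Rightarrow> nat \<Rightarrow> 's smp_protocol \<Rightarrow> bool" where
  "valid_smp k n P \<longleftrightarrow>
     (\<forall>l<k. \<forall>w\<in>bitstrings n. density_on {..<2 ^ qubits P l} (msg P l w)) \<and>
     povm_on (joint_space k P) (referee P)"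

definition smp_cost :: "nat \<Rightarrow> 's smp_protocol \<Rightarrow> nat" where
  "smp_cost k P = (\<Sum>l<k. qubits P l)"

definition output_prob :: "nat \<Rightarrow> 's smp_protocol \<Rightarrow> (nat \<Rightarrow> bits) \<Rightarrow> 's \<Rightarrow> real" where
  "output_prob k P x s =
     Re (\<Sum>a\<in>joint_space k P. \<Sum>b\<in>joint_space k P. referee P s a b * joint_state k P x b a)"

end

theory Submission
  imports Defs "HOL-Analysis.L2_Norm"
begin

definition idm :: "'a \<Rightarrow> 'a \<Rightarrow> real" where "idm a b = (if a = b then 1 else 0)"

definition mmul :: "'a set \<Rightarrow> ('a \<Rightarrow> 'a \<Rightarrow> real) \<Rightarrow> ('a \<Rightarrow> 'a \<Rightarrow> real) \<Rightarrow> 'a \<Rightarrow> 'a \<Rightarrow> real" where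
  "mmul A X Y a b = (\<Sum>c\<in>A. X a c * Y c b)"

definition gram :: "'a set \<Rightarrow> ('a \<Rightarrow> 'a \<Rightarrow> real) \<Rightarrow> 'a \<Rightarrow> 'a \<Rightarrow> real" where
  "gram A K a b = (\<Sum>c\<in>A. K c a * K c b)"

definition mv :: "'a set \<Rightarrow> ('a \<Rightarrow> 'a \<Rightarrow> real) \<Rightarrow> ('a \<Rightarrow> real) \<Rightarrow> 'a \<Rightarrow> real" where
  "mv A X v a = (\<Sum>b\<in>A. X a b * v b)"

definition qf :: "'a set \<Rightarrow> ('a \<Rightarrow> 'a \<Rightarrow> real) \<Rightarrow> ('a \<Rightarrow> real) \<Rightarrow> real" where
  "qf A X v = (\<Sum>a\<in>A. \<Sum>b\<in>A. v a * X a b * v b)"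

definition is_proj :: "'a set \<Rightarrow> ('a \<Rightarrow> 'a \<Rightarrow> real) \<Rightarrow> bool" where
  "is_proj A P \<longleftrightarrow> (\<forall>a\<in>A. \<forall>b\<in>A. P a b = P b a) \<and> (\<forall>a\<in>A. \<forall>b\<in>A. (\<Sum>c\<in>A. P a c * P c b) = P a b)"

definition cmp :: "('a \<Rightarrow> 'a \<Rightarrow> real) \<Rightarrow> 'a \<Rightarrow> 'a \<Rightarrow> real" where
  "cmp P a b = idm a b - P a b"

lemma sum_idm_left: "finite A \<Longrightarrow> a \<in> A \<Longrightarrow> (\<Sum>c\<in>A. idm a c * f c) = f a"
proof -
  assume as: "finite A" "a \<in> A"
  have "(\<Sum>c\<in>A. idm a c * f c) = (\<Sum>c\<in>A. if a = c then f a else 0)" by (rule sum.cong) (auto simp: idm_def)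
  also have "\<dots> = f a" using as by simp
  finally show ?thesis .
qed

lemma sum_idm_right: "finite A \<Longrightarrow> a \<in> A \<Longrightarrow> (\<Sum>c\<in>A. f c * idm c a) = f a"
proof -
  assume as: "finite A" "a \<in> A"
  have "(\<Sum>c\<in>A. f c * idm c a) = (\<Sum>c\<in>A. if c = a then f a else 0)" by (rule sum.cong) (auto simp: idm_def)
  also have "\<dots> = f a" using as by simp
  finally show ?thesis .
qed

lemma is_proj_cmp:
  assumes "finite A" "is_proj A P" shows "is_proj A (cmp P)"
proof -
  have s: "\<forall>a\<in>A. \<forall>b\<in>A. cmp P a b = cmp P b a"
    using assms(2) unfolding is_proj_def cmp_def idm_def by auto
  have idem: "\<And>a b. a \<in> A \<Longrightarrow> b \<in> A \<Longrightarrow> (\<Sum>c\<in>A. P a c * P c b) = P a b"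
    using assms(2) unfolding is_proj_def by blast
  have "(\<Sum>c\<in>A. cmp P a c * cmp P c b) = cmp P a b" if "a \<in> A" "b \<in> A" for a b
  proof -
    have h1: "(\<Sum>c\<in>A. idm a c * idm c b) = idm a b" by (rule sum_idm_left[OF assms(1) that(1)])
    have h2: "(\<Sum>c\<in>A. idm a c * P c b) = P a b" by (rule sum_idm_left[OF assms(1) that(1)])
    have h3: "(\<Sum>c\<in>A. P a c * idm c b) = P a b" using assms(1) that(2) by (rule sum_idm_right)
    have "(\<Sum>c\<in>A. cmp P a c * cmp P c b) =
      (\<Sum>c\<in>A. idm a c * idm c b - idm a c * P c b - P a c * idm c b + P a c * P c b)"
      unfolding cmp_def by (rule sum.cong) (auto simp: algebra_simps)
    also have "\<dots> = (\<Sum>c\<in>A. idm a c * idm c b) - (\<Sum>c\<in>A. idm a c * P c b) - (\<Sum>c\<in>A. P a c * idm c b) + (\<Sum>c\<in>A. P a c * P c b)"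
      by (simp only: sum.distrib sum_subtractf)
    also have "\<dots> = idm a b - P a b - P a b + P a b"
      by (simp only: h1 h2 h3 idem[OF that])
    finally show ?thesis unfolding cmp_def by simp
  qed
  with s show ?thesis unfolding is_proj_def by blast
qed

lemma is_proj_idm: "finite A \<Longrightarrow> is_proj A idm"
  unfolding is_proj_def by (auto simp: sum_idm_left) (auto simp: idm_def)

lemma is_proj_zero: "is_proj A (\<lambda>a b. 0)"
  unfolding is_proj_def by auto

lemma proj_inner:
  assumes "finite A" "is_proj A P"
  shows "(\<Sum>c\<in>A. (\<Sum>e\<in>A. P c e * u e) * (\<Sum>f\<in>A. P c f * w f)) = (\<Sum>e\<in>A. \<Sum>f\<in>A. u e * w f * P e f)"
proof -
  have "(\<Sum>c\<in>A. (\<Sum>e\<in>A. P c e * u e) * (\<Sum>f\<in>A. P c f * w f)) =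
        (\<Sum>c\<in>A. \<Sum>e\<in>A. \<Sum>f\<in>A. u e * w f * (P e c * P c f))"
    apply (rule sum.cong, simp)
    apply (simp add: sum_product)
    apply (rule sum.cong, simp)+
    using assms(2) unfolding is_proj_def by (simp add: algebra_simps)
  also have "\<dots> = (\<Sum>e\<in>A. \<Sum>c\<in>A. \<Sum>f\<in>A. u e * w f * (P e c * P c f))"
    by (rule sum.swap)
  also have "\<dots> = (\<Sum>e\<in>A. \<Sum>f\<in>A. \<Sum>c\<in>A. u e * w f * (P e c * P c f))"
    by (rule sum.cong[OF refl], rule sum.swap)
  also have "\<dots> = (\<Sum>e\<in>A. \<Sum>f\<in>A. u e * w f * P e f)"
  proof (rule sum.cong[OF refl], rule sum.cong[OF refl])
    fix e f assume "e \<in> A" "f \<in> A"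
    then have "(\<Sum>c\<in>A. P e c * P c f) = P e f" using assms(2) unfolding is_proj_def by blast
    then show "(\<Sum>c\<in>A. u e * w f * (P e c * P c f)) = u e * w f * P e f"
      by (simp only: sum_distrib_left[symmetric])
  qed
  finally show ?thesis .
qed

definition ip :: "'a set \<Rightarrow> ('a \<Rightarrow> real) \<Rightarrow> ('a \<Rightarrow> 'a \<Rightarrow> real) \<Rightarrow> real" where
  "ip A u P = (\<Sum>e\<in>A. \<Sum>f\<in>A. u e * u f * P e f)"

lemma L2_sq: "(L2_set f A)\<^sup>2 = (\<Sum>i\<in>A. (f i)\<^sup>2)"
  unfolding L2_set_def by (simp add: sum_nonneg)

lemma sq_nrm_mv:
  assumes "finite A" "is_proj A P"
  shows "(L2_set (mv A P u) A)\<^sup>2 = ip A u P"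
  unfolding L2_sq mv_def ip_def by (simp add: power2_eq_square proj_inner[OF assms])

lemma ip_idm: "finite A \<Longrightarrow> ip A u idm = (L2_set u A)\<^sup>2"
  unfolding ip_def L2_sq
proof -
  assume fA: "finite A"
  have "(\<Sum>e\<in>A. \<Sum>f\<in>A. u e * u f * idm e f) = (\<Sum>e\<in>A. u e * u e)"
  proof (rule sum.cong[OF refl])
    fix e assume "e \<in> A"
    have "(\<Sum>f\<in>A. u e * u f * idm e f) = u e * (\<Sum>f\<in>A. idm e f * u f)"
      by (simp add: sum_distrib_left algebra_simps)
    also have "\<dots> = u e * u e" using sum_idm_left[OF fA \<open>e \<in> A\<close>] by simp
    finally show "(\<Sum>f\<in>A. u e * u f * idm e f) = u e * u e" .
  qed
  then show "(\<Sum>e\<in>A. \<Sum>f\<in>A. u e * u f * idm e f) = (\<Sum>i\<in>A. (u i)\<^sup>2)"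
    by (simp add: power2_eq_square)
qed

lemma ip_cmp: "finite A \<Longrightarrow> ip A u (cmp P) = (L2_set u A)\<^sup>2 - ip A u P"
  using ip_idm[of A u] unfolding ip_def cmp_def
  by (simp add: algebra_simps sum_subtractf)

lemma mv_cmp: "a \<in> A \<Longrightarrow> finite A \<Longrightarrow> mv A (cmp P) u a = u a - mv A P u a"
  unfolding mv_def cmp_def using sum_idm_left[of A a u]
  by (simp add: algebra_simps sum_subtractf)

lemma proj_err:
  assumes "finite A" "is_proj A P"
  shows "(L2_set (\<lambda>a. mv A P u a - u a) A)\<^sup>2 = (L2_set u A)\<^sup>2 - ip A u P"
proof -
  have "L2_set (\<lambda>a. mv A P u a - u a) A = L2_set (mv A (cmp P) u) A"
    unfolding L2_set_def
    by (rule arg_cong[where f=sqrt], rule sum.cong[OF refl]) (simp add: mv_cmp[OF _ assms(1)] power2_commute)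
  then show ?thesis using sq_nrm_mv[OF assms(1) is_proj_cmp[OF assms]] ip_cmp[OF assms(1)] by simp
qed

lemma proj_contr:
  assumes "finite A" "is_proj A P"
  shows "L2_set (mv A P u) A \<le> L2_set u A"
proof -
  have "0 \<le> ip A u (cmp P)"
    using sq_nrm_mv[OF assms(1) is_proj_cmp[OF assms], of u] by (metis zero_le_power2)
  then have "(L2_set (mv A P u) A)\<^sup>2 \<le> (L2_set u A)\<^sup>2"
    using sq_nrm_mv[OF assms] ip_cmp[OF assms(1)] by simp
  then show ?thesis using power2_le_imp_le by force
qed

lemma gram_mmul:
  assumes "finite A" "is_proj A P"
  shows "gram A (mmul A P K) a b = (\<Sum>e\<in>A. \<Sum>f\<in>A. K e a * K f b * P e f)"
  unfolding gram_def mmul_def using proj_inner[OF assms, of "\<lambda>e. K e a" "\<lambda>f. K f b"] by simp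

lemma gram_split:
  assumes "finite A" "is_proj A P" "a \<in> A" "b \<in> A"
  shows "gram A (mmul A P K) a b + gram A (mmul A (cmp P) K) a b = gram A K a b"
proof -
  have "gram A (mmul A P K) a b + gram A (mmul A (cmp P) K) a b =
     (\<Sum>e\<in>A. \<Sum>f\<in>A. K e a * K f b * idm e f)"
    unfolding gram_mmul[OF assms(1,2)] gram_mmul[OF assms(1) is_proj_cmp[OF assms(1,2)]]
    unfolding cmp_def by (simp add: algebra_simps sum_subtractf)
  also have "\<dots> = (\<Sum>e\<in>A. K e a * K e b)"
  proof (rule sum.cong[OF refl])
    fix e assume "e \<in> A"
    have "(\<Sum>f\<in>A. K e a * K f b * idm e f) = K e a * (\<Sum>f\<in>A. idm e f * K f b)"
      by (simp add: sum_distrib_left algebra_simps)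
    then show "(\<Sum>f\<in>A. K e a * K f b * idm e f) = K e a * K e b"
      using sum_idm_left[OF assms(1) \<open>e \<in> A\<close>] by simp
  qed
  finally show ?thesis unfolding gram_def .
qed

lemma qf_gram: "qf A (gram A K) v = (L2_set (mv A K v) A)\<^sup>2"
proof -
  have "qf A (gram A K) v = (\<Sum>a\<in>A. \<Sum>b\<in>A. \<Sum>c\<in>A. K c a * v a * (K c b * v b))"
    unfolding qf_def gram_def by (simp add: sum_distrib_left sum_distrib_right algebra_simps)
  also have "\<dots> = (\<Sum>a\<in>A. \<Sum>c\<in>A. \<Sum>b\<in>A. K c a * v a * (K c b * v b))"
    by (rule sum.cong[OF refl], rule sum.swap)
  also have "\<dots> = (\<Sum>c\<in>A. \<Sum>a\<in>A. \<Sum>b\<in>A. K c a * v a * (K c b * v b))"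
    by (rule sum.swap)
  also have "\<dots> = (\<Sum>c\<in>A. (\<Sum>a\<in>A. K c a * v a) * (\<Sum>b\<in>A. K c b * v b))"
    by (simp add: sum_product)
  finally show ?thesis unfolding L2_sq mv_def by (simp add: power2_eq_square)
qed

lemma mv_mmul: "mv A (mmul A P K) v a = mv A P (mv A K v) a"
proof -
  have "mv A (mmul A P K) v a = (\<Sum>b\<in>A. \<Sum>c\<in>A. P a c * (K c b * v b))"
    unfolding mv_def mmul_def by (rule sum.cong[OF refl]) (simp add: sum_distrib_right sum_distrib_left algebra_simps)
  also have "\<dots> = (\<Sum>c\<in>A. \<Sum>b\<in>A. P a c * (K c b * v b))" by (rule sum.swap)
  finally show ?thesis unfolding mv_def by (simp add: sum_distrib_left)
qed

fun leaves :: "'s meq_tree \<Rightarrow> 's set" where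
  "leaves (Leaf s) = {s}"
| "leaves (Node i j y z l r) = leaves l \<union> leaves r"

fun nodes :: "'s meq_tree \<Rightarrow> (nat \<times> nat \<times> bits \<times> bits) set" where
  "nodes (Leaf s) = {}"
| "nodes (Node i j y z l r) = insert (i, j, y, z) (nodes l \<union> nodes r)"

lemma finite_leaves: "finite (leaves T)"
  by (induction T) auto

fun Eop :: "'a set \<Rightarrow> (nat \<Rightarrow> nat \<Rightarrow> bits \<Rightarrow> bits \<Rightarrow> 'a \<Rightarrow> 'a \<Rightarrow> real) \<Rightarrow> 's meq_tree
    \<Rightarrow> ('a \<Rightarrow> 'a \<Rightarrow> real) \<Rightarrow> 's \<Rightarrow> 'a \<Rightarrow> 'a \<Rightarrow> real" where
  "Eop A pj (Leaf s') K s = (if s = s' then gram A K else (\<lambda>a b. 0))"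
| "Eop A pj (Node i j y z l r) K s =
     (\<lambda>a b. Eop A pj r (mmul A (pj i j y z) K) s a b + Eop A pj l (mmul A (cmp (pj i j y z)) K) s a b)"

lemma Eop_sum:
  assumes "finite A" "\<forall>(i,j,y,z)\<in>nodes T. is_proj A (pj i j y z)" "finite F" "leaves T \<subseteq> F"
    "a \<in> A" "b \<in> A"
  shows "(\<Sum>s\<in>F. Eop A pj T K s a b) = gram A K a b"
  using assms(2,4)
proof (induction T arbitrary: K)
  case (Leaf s')
  have "(\<Sum>s\<in>F. Eop A pj (Leaf s') K s a b) = (\<Sum>s\<in>F. if s = s' then gram A K a b else 0)"
    by (rule sum.cong) auto
  then show ?case using assms(3) Leaf by simp
next
  case (Node i j y z l r)
  have "(\<Sum>s\<in>F. Eop A pj (Node i j y z l r) K s a b) =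
    (\<Sum>s\<in>F. Eop A pj r (mmul A (pj i j y z) K) s a b) + (\<Sum>s\<in>F. Eop A pj l (mmul A (cmp (pj i j y z)) K) s a b)"
    by (simp add: sum.distrib)
  also have "\<dots> = gram A (mmul A (pj i j y z) K) a b + gram A (mmul A (cmp (pj i j y z)) K) a b"
    using Node by simp
  also have "\<dots> = gram A K a b"
    using gram_split[OF assms(1) _ assms(5,6)] Node.prems by simp
  finally show ?case .
qed

lemma Eop_out: "s \<notin> leaves T \<Longrightarrow> Eop A pj T K s a b = 0"
  by (induction T arbitrary: K) auto

lemma Eop_sym: "Eop A pj T K s a b = Eop A pj T K s b a"
  by (induction T arbitrary: K) (auto simp: gram_def mult.commute)

lemma qf_add: "qf A (\<lambda>a b. X a b + Y a b) v = qf A X v + qf A Y v"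
  unfolding qf_def by (simp add: algebra_simps sum.distrib)

lemma Eop_qf: "0 \<le> qf A (Eop A pj T K s) v"
proof (induction T arbitrary: K)
  case (Leaf s')
  then show ?case using qf_gram[of A K v] by (auto simp: qf_def)
next
  case (Node i j y z l r)
  then show ?case by (simp add: qf_add)
qed

lemma mv_diff: "mv A P (\<lambda>b. u b - w b) a = mv A P u a - mv A P w a"
  unfolding mv_def by (simp add: algebra_simps sum_subtractf)

lemma path_lemma:
  assumes fA: "finite A" and eps: "0 \<le> \<epsilon>"
    and H: "\<forall>(i,j,y,z)\<in>nodes T. is_proj A (pj i j y z) \<and>
       L2_set (\<lambda>a. mv A (if xor_bits (x i) y = xor_bits (x j) z then pj i j y z else cmp (pj i j y z)) \<psi> a - \<psi> a) A \<le> \<epsilon>"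
  shows "\<exists>M. (L2_set (mv A M \<psi>) A)\<^sup>2 \<le> qf A (Eop A pj T K (meq_eval T x)) \<psi> \<and>
      L2_set (\<lambda>a. mv A M \<psi> a - \<psi> a) A \<le> L2_set (\<lambda>a. mv A K \<psi> a - \<psi> a) A + real (meq_depth T) * \<epsilon>"
  using H
proof (induction T arbitrary: K)
  case (Leaf s)
  then show ?case by (intro exI[of _ K]) (simp add: qf_gram)
next
  case (Node i j y z l r)
  define c where "c = (xor_bits (x i) y = xor_bits (x j) z)"
  define P where "P = (if c then pj i j y z else cmp (pj i j y z))"
  define t where "t = (if c then r else l)"
  have projP: "is_proj A P" unfolding P_def using Node.prems is_proj_cmp[OF fA] by auto
  have errP: "L2_set (\<lambda>a. mv A P \<psi> a - \<psi> a) A \<le> \<epsilon>" unfolding P_def c_def using Node.prems by auto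
  have Ht: "\<forall>(i,j,y,z)\<in>nodes t. is_proj A (pj i j y z) \<and>
       L2_set (\<lambda>a. mv A (if xor_bits (x i) y = xor_bits (x j) z then pj i j y z else cmp (pj i j y z)) \<psi> a - \<psi> a) A \<le> \<epsilon>"
    using Node.prems unfolding t_def by auto
  have IH: "\<exists>M. (L2_set (mv A M \<psi>) A)\<^sup>2 \<le> qf A (Eop A pj t (mmul A P K) (meq_eval t x)) \<psi> \<and>
      L2_set (\<lambda>a. mv A M \<psi> a - \<psi> a) A \<le> L2_set (\<lambda>a. mv A (mmul A P K) \<psi> a - \<psi> a) A + real (meq_depth t) * \<epsilon>"
    unfolding t_def using Node.IH Ht unfolding t_def by (cases c) auto
  then obtain M where M1: "(L2_set (mv A M \<psi>) A)\<^sup>2 \<le> qf A (Eop A pj t (mmul A P K) (meq_eval t x)) \<psi>"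
    and M2: "L2_set (\<lambda>a. mv A M \<psi> a - \<psi> a) A \<le> L2_set (\<lambda>a. mv A (mmul A P K) \<psi> a - \<psi> a) A + real (meq_depth t) * \<epsilon>"
    by blast
  have "qf A (Eop A pj t (mmul A P K) (meq_eval t x)) \<psi> \<le> qf A (Eop A pj (Node i j y z l r) K (meq_eval (Node i j y z l r) x)) \<psi>"
    unfolding P_def t_def c_def using Eop_qf by (auto simp: qf_add)
  moreover
  have "L2_set (\<lambda>a. mv A (mmul A P K) \<psi> a - \<psi> a) A \<le> L2_set (\<lambda>b. mv A K \<psi> b - \<psi> b) A + \<epsilon>"
  proof -
  have "L2_set (\<lambda>a. mv A (mmul A P K) \<psi> a - \<psi> a) A =
        L2_set (\<lambda>a. mv A P (\<lambda>b. mv A K \<psi> b - \<psi> b) a + (mv A P \<psi> a - \<psi> a)) A"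
    by (rule L2_set_cong) (auto simp: mv_mmul mv_diff)
  also have "\<dots> \<le> L2_set (mv A P (\<lambda>b. mv A K \<psi> b - \<psi> b)) A + L2_set (\<lambda>a. mv A P \<psi> a - \<psi> a) A"
    by (rule L2_set_triangle_ineq)
  also have "\<dots> \<le> L2_set (\<lambda>b. mv A K \<psi> b - \<psi> b) A + \<epsilon>"
    using proj_contr[OF fA projP] errP by (meson add_mono)
  finally show ?thesis .
  qed
  moreover have "real (meq_depth t) + 1 \<le> real (meq_depth (Node i j y z l r))"
    unfolding t_def by auto
  then have "real (meq_depth t) * \<epsilon> + \<epsilon> \<le> real (meq_depth (Node i j y z l r)) * \<epsilon>"
    using mult_right_mono[OF _ eps] by (metis distrib_right mult_1)
  ultimately show ?case using M1 M2 eps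
    by (intro exI[of _ M]) linarith
qed

fun dotp :: "bits \<Rightarrow> bits \<Rightarrow> bool" where
  "dotp (a # as) (b # bs) = ((a \<and> b) \<noteq> dotp as bs)"
| "dotp _ _ = False"

lemma length_xor [simp]: "length (xor_bits a b) = min (length a) (length b)"
  unfolding xor_bits_def by simp

lemma xor_Cons [simp]: "xor_bits (a # as) (b # bs) = (a \<noteq> b) # xor_bits as bs"
  unfolding xor_bits_def by simp

lemma xor_Nil [simp]: "xor_bits [] bs = []" "xor_bits as [] = []"
  unfolding xor_bits_def by auto

lemma dotp_xor: "length a = length b \<Longrightarrow> dotp c (xor_bits a b) = (dotp c a \<noteq> dotp c b)"
proof (induction c arbitrary: a b)
  case Nil then show ?case by simp
next
  case (Cons e c)
  then show ?case by (cases a; cases b) auto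
qed

lemma xor_cancel: "length y = length a \<Longrightarrow> length z = length a \<Longrightarrow> (xor_bits a y = xor_bits a z) = (y = z)"
proof (induction a arbitrary: y z)
  case Nil then show ?case by simp
next
  case (Cons e a)
  then show ?case by (cases y; cases z) auto
qed

lemma finite_bits [simp]: "finite (bitstrings n)"
  unfolding bitstrings_def using finite_lists_length_eq[of "UNIV :: bool set" n] by simp

lemma card_bits: "card (bitstrings n) = 2 ^ n"
  unfolding bitstrings_def using card_lists_length_eq[of "UNIV :: bool set" n] by simp

lemma bits_Suc: "bitstrings (Suc n) = (\<lambda>c. True # c) ` bitstrings n \<union> (\<lambda>c. False # c) ` bitstrings n"
  unfolding bitstrings_def
  by (auto simp: length_Suc_conv image_iff)

lemma sum_bits_Suc:
  fixes F :: "bits \<Rightarrow> 'b::comm_monoid_add"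
  shows "(\<Sum>c\<in>bitstrings (Suc n). F c) = (\<Sum>c\<in>bitstrings n. F (True # c) + F (False # c))"
proof -
  have "(\<Sum>c\<in>bitstrings (Suc n). F c) = (\<Sum>c\<in>(\<lambda>c. True # c) ` bitstrings n. F c) + (\<Sum>c\<in>(\<lambda>c. False # c) ` bitstrings n. F c)"
    unfolding bits_Suc by (rule sum.union_disjoint) auto
  also have "\<dots> = (\<Sum>c\<in>bitstrings n. F (True # c)) + (\<Sum>c\<in>bitstrings n. F (False # c))"
    by (simp add: sum.reindex inj_on_def)
  finally show ?thesis by (simp add: sum.distrib)
qed

lemma cnt_lemma:
  fixes g :: "bool \<Rightarrow> real"
  shows "length u = n \<Longrightarrow> length v = n \<Longrightarrow> u \<noteq> v \<Longrightarrow>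
    (\<Sum>c\<in>bitstrings n. g (dotp c u \<noteq> dotp c v)) = 2 ^ (n - 1) * (g True + g False)"
proof (induction n arbitrary: u v g)
  case 0 then show ?case by simp
next
  case (Suc n)
  obtain a u' where u: "u = a # u'" "length u' = n" using Suc.prems by (cases u) auto
  obtain b v' where v: "v = b # v'" "length v' = n" using Suc.prems by (cases v) auto
  have eq: "(\<Sum>c\<in>bitstrings (Suc n). g (dotp c u \<noteq> dotp c v)) =
     (\<Sum>c\<in>bitstrings n. g ((a \<noteq> b) \<noteq> (dotp c u' \<noteq> dotp c v')) + g (dotp c u' \<noteq> dotp c v'))"
    unfolding sum_bits_Suc u v by (rule sum.cong[OF refl]) (auto intro: arg_cong[where f=g])
  show ?case
  proof (cases "u' = v'")
    case True
    then have "a \<noteq> b" using Suc.prems u v by auto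
    then show ?thesis unfolding eq using True by (simp add: card_bits)
  next
    case False
    then have "n \<ge> 1" using u v by (cases n) auto
    have "(\<Sum>c\<in>bitstrings n. g ((a \<noteq> b) \<noteq> (dotp c u' \<noteq> dotp c v')) + g (dotp c u' \<noteq> dotp c v'))
      = (\<Sum>c\<in>bitstrings n. (\<lambda>t. g ((a \<noteq> b) \<noteq> t)) (dotp c u' \<noteq> dotp c v')) + (\<Sum>c\<in>bitstrings n. g (dotp c u' \<noteq> dotp c v'))"
      by (simp add: sum.distrib)
    also have "\<dots> = 2 ^ (n - 1) * (g True + g False) + 2 ^ (n - 1) * (g True + g False)"
      using Suc.IH[OF u(2) v(2) False, of g] Suc.IH[OF u(2) v(2) False, of "\<lambda>t. g (\<not> t)"]
      by (cases "a = b") (auto simp: algebra_simps)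
    also have "\<dots> = 2 ^ (Suc n - 1) * (g True + g False)"
      using \<open>n \<ge> 1\<close> by (cases n) auto
    finally show ?thesis unfolding eq .
  qed
qed

definition cnt :: "nat \<Rightarrow> (nat \<Rightarrow> bits) \<Rightarrow> bits \<Rightarrow> bits \<Rightarrow> nat" where
  "cnt N c w1 w2 = card {l\<in>{..<N}. dotp (c l) w1 \<noteq> dotp (c l) w2}"

lemma prod_if_pow:
  fixes a :: real
  shows "finite L \<Longrightarrow> (\<Prod>l\<in>L. if P l then a else 1) = a ^ card {l\<in>L. P l}"
  by (simp add: prod.If_cases Int_def)

lemma sum_PiE_prod:
  fixes g :: "bits \<Rightarrow> real"
  shows "(\<Sum>C\<in>PiE {..<N} (\<lambda>_. bitstrings n). \<Prod>l<N. g (C l)) = (\<Sum>c\<in>bitstrings n. g c) ^ N"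
  using prod_sum_PiE[of "{..<N}" "\<lambda>_. bitstrings n" "\<lambda>_ c. g c"] by simp

lemma exp_count:
  assumes "n \<ge> 1" "w1 \<in> bitstrings n" "w2 \<in> bitstrings n" "w1 \<noteq> w2"
  shows "(\<Sum>C\<in>PiE {..<N} (\<lambda>_. bitstrings n). (3::real) ^ cnt N C w1 w2) = (2 ^ (n+1)) ^ N"
    and "(\<Sum>C\<in>PiE {..<N} (\<lambda>_. bitstrings n). (3::real) ^ (N - cnt N C w1 w2)) = (2 ^ (n+1)) ^ N"
proof -
  have l: "length w1 = n" "length w2 = n" using assms unfolding bitstrings_def by auto
  have p2: "(2::real) ^ (n - 1) * 4 = 2 ^ (n + 1)"
    using assms(1) by (cases n) (auto simp: power_Suc)
  have "(\<Sum>C\<in>PiE {..<N} (\<lambda>_. bitstrings n). (3::real) ^ cnt N C w1 w2)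
     = (\<Sum>C\<in>PiE {..<N} (\<lambda>_. bitstrings n). \<Prod>l<N. (\<lambda>t. if t then 3 else 1) (dotp (C l) w1 \<noteq> dotp (C l) w2))"
    unfolding cnt_def by (rule sum.cong[OF refl]) (simp add: prod_if_pow)
  also have "\<dots> = (2 ^ (n - 1) * 4) ^ N"
    using sum_PiE_prod[where N=N and n=n and g="\<lambda>c. (\<lambda>t. if t then 3 else 1) (dotp c w1 \<noteq> dotp c w2)"]
      cnt_lemma[OF l assms(4), of "\<lambda>t. if t then 3 else 1"] by simp
  also have "\<dots> = (2 ^ (n+1)) ^ N" by (simp only: p2)
  finally show "(\<Sum>C\<in>PiE {..<N} (\<lambda>_. bitstrings n). (3::real) ^ cnt N C w1 w2) = (2 ^ (n+1)) ^ N" .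
  have "(\<Sum>C\<in>PiE {..<N} (\<lambda>_. bitstrings n). (3::real) ^ (N - cnt N C w1 w2))
     = (\<Sum>C\<in>PiE {..<N} (\<lambda>_. bitstrings n). \<Prod>l<N. (\<lambda>t. if t then 1 else 3) (dotp (C l) w1 \<noteq> dotp (C l) w2))"
  proof (rule sum.cong[OF refl])
    fix C
    have "N - cnt N C w1 w2 = card {l\<in>{..<N}. \<not> (dotp (C l) w1 \<noteq> dotp (C l) w2)}"
    proof -
      have "{l\<in>{..<N}. \<not> (dotp (C l) w1 \<noteq> dotp (C l) w2)} = {..<N} - {l\<in>{..<N}. dotp (C l) w1 \<noteq> dotp (C l) w2}"
        by auto
      moreover have "card ({..<N} - {l\<in>{..<N}. dotp (C l) w1 \<noteq> dotp (C l) w2}) = N - card {l\<in>{..<N}. dotp (C l) w1 \<noteq> dotp (C l) w2}"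
        by (subst card_Diff_subset) auto
      ultimately show ?thesis unfolding cnt_def by simp
    qed
    moreover have "(\<Prod>l<N. (\<lambda>t. if t then 1 else 3) (dotp (C l) w1 \<noteq> dotp (C l) w2)) =
      (\<Prod>l<N. if \<not> (dotp (C l) w1 \<noteq> dotp (C l) w2) then (3::real) else 1)"
      by (rule prod.cong) auto
    ultimately show "(3::real) ^ (N - cnt N C w1 w2) = (\<Prod>l<N. (\<lambda>t. if t then 1 else 3) (dotp (C l) w1 \<noteq> dotp (C l) w2))"
      using prod_if_pow[of "{..<N}" "\<lambda>l. \<not> (dotp (C l) w1 \<noteq> dotp (C l) w2)" 3]
      by simp
  qed
  also have "\<dots> = (2 ^ (n - 1) * 4) ^ N"
    using sum_PiE_prod[where N=N and n=n and g="\<lambda>c. (\<lambda>t. if t then 1 else 3) (dotp c w1 \<noteq> dotp c w2)"]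
      cnt_lemma[OF l assms(4), of "\<lambda>t. if t then 1 else 3"] by simp
  also have "\<dots> = (2 ^ (n+1)) ^ N" by (simp only: p2)
  finally show "(\<Sum>C\<in>PiE {..<N} (\<lambda>_. bitstrings n). (3::real) ^ (N - cnt N C w1 w2)) = (2 ^ (n+1)) ^ N" .
qed

lemma num_ineq:
  assumes "n \<ge> 1" "8 * n \<le> K"
  shows "2 * 4 ^ n * 16 ^ K < (27::nat) ^ K"
proof -
  have e: "(2::nat) \<le> 2 ^ n" using assms(1)
    using power_increasing[of 1 n "2::nat"] by simp
  have "(8::nat) ^ n = 2 ^ n * 4 ^ n" by (simp add: power_mult_distrib[symmetric])
  then have e2: "2 * 4 ^ n \<le> (8::nat) ^ n" using e by simp
  have c: "(16::nat) ^ (8 * n) = (16 ^ 8) ^ n" by (simp only: power_mult)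
  have d: "(27::nat) ^ (8 * n) = (27 ^ 8) ^ n" by (simp only: power_mult)
  have a: "2 * 4 ^ n * (16::nat) ^ (8 * n) < 27 ^ (8 * n)"
  proof -
    have "2 * 4 ^ n * (16::nat) ^ (8 * n) \<le> 8 ^ n * (16 ^ 8) ^ n"
      unfolding c using e2 by (rule mult_right_mono) simp
    also have "\<dots> = (8 * 16 ^ 8) ^ n" by (simp only: power_mult_distrib)
    also have "\<dots> < (27 ^ 8) ^ n"
      using assms(1) by (intro power_strict_mono) auto
    also have "\<dots> = 27 ^ (8 * n)" by (simp only: d)
    finally show ?thesis .
  qed
  have b: "(16::nat) ^ (K - 8 * n) \<le> 27 ^ (K - 8 * n)" by (intro power_mono) auto
  have "2 * 4 ^ n * 16 ^ K = (2 * 4 ^ n * (16::nat) ^ (8 * n)) * 16 ^ (K - 8 * n)"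
    using assms(2) by (simp only: mult.assoc power_add[symmetric]) simp
  also have "\<dots> < 27 ^ (8 * n) * 27 ^ (K - 8 * n)"
    using a b by (intro mult_less_le_imp_less) auto
  also have "\<dots> = 27 ^ K" using assms(2) by (simp only: power_add[symmetric]) simp
  finally show ?thesis .
qed

lemma code_exists:
  assumes n1: "n \<ge> 1" and K: "8 * n \<le> K"
  shows "\<exists>C\<in>PiE {..<4*K} (\<lambda>_. bitstrings n). \<forall>w1\<in>bitstrings n. \<forall>w2\<in>bitstrings n.
            w1 \<noteq> w2 \<longrightarrow> K \<le> cnt (4*K) C w1 w2 \<and> cnt (4*K) C w1 w2 \<le> 3*K"
proof (rule ccontr)
  define N where "N = 4 * K"
  define Cd where "Cd = PiE {..<N} (\<lambda>_. bitstrings n)"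
  define Pr where "Pr = {p \<in> bitstrings n \<times> bitstrings n. fst p \<noteq> snd p}"
  define bad where "bad C p = (\<not> (K \<le> cnt N C (fst p) (snd p) \<and> cnt N C (fst p) (snd p) \<le> 3*K))" for C p
  define ind where "ind C p = (if bad C p then 1 else 0::real)" for C p
  assume "\<not> ?thesis"
  then have allbad: "\<forall>C\<in>Cd. \<exists>p\<in>Pr. bad C p"
    unfolding Cd_def Pr_def bad_def N_def by fastforce
  have fCd: "finite Cd" unfolding Cd_def by (simp add: finite_PiE)
  have fPr: "finite Pr" unfolding Pr_def by (rule finite_subset[of _ "bitstrings n \<times> bitstrings n"]) auto
  have cardCd: "real (card Cd) = (2 ^ n) ^ N"
    unfolding Cd_def by (simp add: card_PiE card_bits)
  have cardPr: "real (card Pr) \<le> 4 ^ n"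
  proof -
    have "card Pr \<le> card (bitstrings n \<times> bitstrings n)"
      unfolding Pr_def by (rule card_mono) auto
    also have "\<dots> = 4 ^ n" by (simp add: card_cartesian_product card_bits power_mult_distrib[symmetric])
    finally show ?thesis by (simp add: of_nat_le_iff[symmetric])
  qed
  have pos27: "(0::real) < 27 ^ K" by simp
  have pt: "ind C p \<le> ((3::real) ^ cnt N C (fst p) (snd p) + 3 ^ (N - cnt N C (fst p) (snd p))) / 27 ^ K" for C p
  proof (cases "bad C p")
    case False then show ?thesis unfolding ind_def by (simp add: add_nonneg_nonneg)
  next
    case True
    define c where "c = cnt N C (fst p) (snd p)"
    have "(27::real) ^ K \<le> 3 ^ c + 3 ^ (N - c)"
    proof (cases "3 * K < c")
      case True
      have "(27::real) ^ K = 3 ^ (3 * K)" by (simp add: power_mult)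
      also have "\<dots> \<le> 3 ^ c" using True by (intro power_increasing) auto
      finally show ?thesis by (simp add: add_increasing2)
    next
      case False
      then have "c < K" using \<open>bad C p\<close> unfolding bad_def c_def by auto
      then have "3 * K \<le> N - c" unfolding N_def by auto
      have "(27::real) ^ K = 3 ^ (3 * K)" by (simp add: power_mult)
      also have "\<dots> \<le> 3 ^ (N - c)" using \<open>3 * K \<le> N - c\<close> by (intro power_increasing) auto
      finally show ?thesis by (simp add: add_increasing)
    qed
    then show ?thesis unfolding ind_def c_def using True by simp
  qed
  have perp: "(\<Sum>C\<in>Cd. ind C p) \<le> 2 * (2 ^ (n+1)) ^ N / 27 ^ K" if "p \<in> Pr" for p
  proof -
    have w: "fst p \<in> bitstrings n" "snd p \<in> bitstrings n" "fst p \<noteq> snd p" using that unfolding Pr_def by auto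
    have "(\<Sum>C\<in>Cd. ind C p) \<le> (\<Sum>C\<in>Cd. ((3::real) ^ cnt N C (fst p) (snd p) + 3 ^ (N - cnt N C (fst p) (snd p))) / 27 ^ K)"
      by (rule sum_mono) (rule pt)
    also have "\<dots> = ((\<Sum>C\<in>Cd. (3::real) ^ cnt N C (fst p) (snd p)) + (\<Sum>C\<in>Cd. 3 ^ (N - cnt N C (fst p) (snd p)))) / 27 ^ K"
      by (simp only: sum_divide_distrib[symmetric] sum.distrib)
    also have "\<dots> = 2 * (2 ^ (n+1)) ^ N / 27 ^ K"
      unfolding Cd_def exp_count[OF n1 w] by simp
    finally show ?thesis .
  qed
  have "(\<Sum>p\<in>Pr. \<Sum>C\<in>Cd. ind C p) \<le> (\<Sum>p\<in>Pr. 2 * (2 ^ (n+1)) ^ N / 27 ^ K)"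
    by (rule sum_mono) (rule perp)
  also have "\<dots> = real (card Pr) * (2 * (2 ^ (n+1)) ^ N / 27 ^ K)" by simp
  also have "\<dots> \<le> 4 ^ n * (2 * (2 ^ (n+1)) ^ N / 27 ^ K)"
    using cardPr by (intro mult_right_mono) auto
  also have "\<dots> < (2 ^ n) ^ N"
  proof -
    have "real (2 * 4 ^ n * 16 ^ K) < real (27 ^ K)" using num_ineq[OF n1 K] by linarith
    then have i: "2 * 4 ^ n * 16 ^ K < (27::real) ^ K" by simp
    have "(2::real) ^ (n+1) = 2 * 2 ^ n" by simp
    then have "((2::real) ^ (n+1)) ^ N = 16 ^ K * (2 ^ n) ^ N"
      unfolding N_def by (simp add: power_mult_distrib power_mult)
    then have "4 ^ n * (2 * (2 ^ (n+1)) ^ N / 27 ^ K) = (2 * 4 ^ n * 16 ^ K) * (2 ^ n) ^ N / (27::real) ^ K"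
      by simp
    also have "\<dots> < 27 ^ K * (2 ^ n) ^ N / 27 ^ K"
      using i by (intro divide_strict_right_mono mult_strict_right_mono) auto
    finally show ?thesis by simp
  qed
  finally have lt: "(\<Sum>C\<in>Cd. \<Sum>p\<in>Pr. ind C p) < real (card Cd)"
    unfolding cardCd by (subst sum.swap)
  have "real (card Cd) = (\<Sum>C\<in>Cd. 1)" by simp
  also have "\<dots> \<le> (\<Sum>C\<in>Cd. \<Sum>p\<in>Pr. ind C p)"
  proof (rule sum_mono)
    fix C assume "C \<in> Cd"
    then obtain p where p: "p \<in> Pr" "bad C p" using allbad by blast
    have "1 = ind C p" using p unfolding ind_def by simp
    also have "\<dots> \<le> (\<Sum>p\<in>Pr. ind C p)"
      using p fPr by (intro member_le_sum) (auto simp: ind_def)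
    finally show "1 \<le> (\<Sum>p\<in>Pr. ind C p)" .
  qed
  finally show False using lt by simp
qed

definition sg :: "bool \<Rightarrow> real" where "sg b = (if b then -1 else 1)"

lemma sg_sq [simp]: "sg b * sg b = 1" unfolding sg_def by auto
lemma sg_neq: "sg (a \<noteq> b) = sg a * sg b" unfolding sg_def by auto

definition mix :: "nat set \<Rightarrow> (nat \<Rightarrow> nat) \<Rightarrow> (nat \<Rightarrow> nat) \<Rightarrow> nat \<Rightarrow> nat" where
  "mix T t t' = (\<lambda>r. if r \<in> T then t' r else t r)"

lemma mix_mix: "mix T' (mix T t t') (mix T t' t) = mix ((T - T') \<union> (T' - T)) t t'"
  unfolding mix_def by auto

lemma mix_empty [simp]: "mix {} t t' = t" unfolding mix_def by simp

lemma mix_PiE: "t \<in> PiE I B \<Longrightarrow> t' \<in> PiE I B \<Longrightarrow> mix T t t' \<in> PiE I B"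
  unfolding mix_def PiE_def Pi_def extensional_def by auto

locale fp =
  fixes n k m R :: nat and c :: "nat \<Rightarrow> bits" and dec :: "nat \<Rightarrow> nat \<Rightarrow> nat" and enc :: "(nat \<Rightarrow> nat) \<Rightarrow> nat"
  assumes c_bits: "\<And>l. l < 2^m \<Longrightarrow> c l \<in> bitstrings n"
  and c_good: "\<And>w1 w2. w1 \<in> bitstrings n \<Longrightarrow> w2 \<in> bitstrings n \<Longrightarrow> w1 \<noteq> w2 \<Longrightarrow>
      2^m \<le> 4 * cnt (2^m) c w1 w2 \<and> 4 * cnt (2^m) c w1 w2 \<le> 3 * 2^m"
  and dec_in: "\<And>d. d < 2^(m*R) \<Longrightarrow> dec d \<in> PiE {..<R} (\<lambda>_. {..<2^m})"
  and enc_in: "\<And>t. t \<in> PiE {..<R} (\<lambda>_. {..<2^m}) \<Longrightarrow> enc t < 2^(m*R)"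
  and enc_dec: "\<And>d. d < 2^(m*R) \<Longrightarrow> enc (dec d) = d"
  and dec_enc: "\<And>t. t \<in> PiE {..<R} (\<lambda>_. {..<2^m}) \<Longrightarrow> dec (enc t) = t"
begin

abbreviation "N \<equiv> (2::nat)^m"
abbreviation "M \<equiv> (2::nat)^(m*R)"
abbreviation "Tup \<equiv> PiE {..<R} (\<lambda>_. {..<N})"

definition AA :: "(nat \<Rightarrow> nat) set" where "AA = PiE {..<k} (\<lambda>_. {..<M})"

definition sig :: "bits \<Rightarrow> nat \<Rightarrow> real" where
  "sig w d = (\<Prod>r<R. sg (dotp (c (dec d r)) w))"

definition phi :: "bits \<Rightarrow> nat \<Rightarrow> real" where
  "phi w d = sig w d / sqrt (real M)"

definition psi :: "(nat \<Rightarrow> bits) \<Rightarrow> (nat \<Rightarrow> nat) \<Rightarrow> real" where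
  "psi x a = (\<Prod>l<k. phi (x l) (a l))"

definition tau :: "nat \<Rightarrow> nat \<Rightarrow> nat set \<Rightarrow> (nat \<Rightarrow> nat) \<Rightarrow> nat \<Rightarrow> nat" where
  "tau i j T a = a(i := enc (mix T (dec (a i)) (dec (a j))), j := enc (mix T (dec (a j)) (dec (a i))))"

definition vv :: "nat \<Rightarrow> nat \<Rightarrow> bits \<Rightarrow> bits \<Rightarrow> (nat \<Rightarrow> nat) \<Rightarrow> real" where
  "vv i j y z a = sig y (a i) * sig z (a j)"

definition swp :: "nat \<Rightarrow> nat \<Rightarrow> bits \<Rightarrow> bits \<Rightarrow> (nat \<Rightarrow> nat) \<Rightarrow> (nat \<Rightarrow> nat) \<Rightarrow> real" where
  "swp i j y z a b = (\<Sum>T\<in>Pow {..<R}. if b = tau i j T a then vv i j y z a * vv i j y z b else 0) / 2 ^ R"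

definition pj :: "nat \<Rightarrow> nat \<Rightarrow> bits \<Rightarrow> bits \<Rightarrow> (nat \<Rightarrow> nat) \<Rightarrow> (nat \<Rightarrow> nat) \<Rightarrow> real" where
  "pj i j y z = (if i = j then (if y = z then idm else (\<lambda>a b. 0)) else swp i j y z)"

lemma finite_AA [simp]: "finite AA" unfolding AA_def by (simp add: finite_PiE)

lemma sig_sq [simp]: "sig w d * sig w d = 1"
  unfolding sig_def by (simp add: prod.distrib[symmetric])

lemma vv_sq [simp]: "vv i j y z a * vv i j y z a = 1"
  unfolding vv_def by (metis mult.commute mult.left_commute mult_1 sig_sq)

lemma AA_iff: "a \<in> AA \<longleftrightarrow> (\<forall>l<k. a l < M) \<and> (\<forall>l. l \<ge> k \<longrightarrow> a l = undefined)"
  unfolding AA_def PiE_def Pi_def extensional_def by auto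

context
  fixes i j assumes ij: "i < k" "j < k" "i \<noteq> j"
begin

lemma tau_in: "a \<in> AA \<Longrightarrow> tau i j T a \<in> AA"
proof -
  assume a: "a \<in> AA"
  then have "dec (a i) \<in> Tup" "dec (a j) \<in> Tup" using ij dec_in unfolding AA_iff by auto
  then have "enc (mix T (dec (a i)) (dec (a j))) < M" "enc (mix T (dec (a j)) (dec (a i))) < M"
    using enc_in mix_PiE by auto
  then show ?thesis using a ij unfolding AA_iff tau_def by auto
qed

lemma dec_tau: "a \<in> AA \<Longrightarrow> dec (tau i j T a i) = mix T (dec (a i)) (dec (a j)) \<and>
   dec (tau i j T a j) = mix T (dec (a j)) (dec (a i))"
proof -
  assume a: "a \<in> AA"
  then have "dec (a i) \<in> Tup" "dec (a j) \<in> Tup" using ij dec_in unfolding AA_iff by auto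
  then show ?thesis using ij dec_enc mix_PiE unfolding tau_def by auto
qed

lemma tau_other: "l \<noteq> i \<Longrightarrow> l \<noteq> j \<Longrightarrow> tau i j T a l = a l"
  unfolding tau_def by auto

lemma tau_comp: "a \<in> AA \<Longrightarrow> tau i j T' (tau i j T a) = tau i j ((T - T') \<union> (T' - T)) a"
proof -
  assume a: "a \<in> AA"
  have d: "dec (tau i j T a i) = mix T (dec (a i)) (dec (a j))" "dec (tau i j T a j) = mix T (dec (a j)) (dec (a i))"
    using dec_tau[OF a] by auto
  show ?thesis
  proof
    fix l
    show "tau i j T' (tau i j T a) l = tau i j ((T - T') \<union> (T' - T)) a l"
      using ij unfolding tau_def[of _ _ T'] d
      by (cases "l = i"; cases "l = j") (auto simp: mix_mix[symmetric] tau_def)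
  qed
qed

lemma tau_empty: "a \<in> AA \<Longrightarrow> tau i j {} a = a"
proof -
  assume a: "a \<in> AA"
  then have "a i < M" "a j < M" using ij unfolding AA_iff by auto
  then show ?thesis unfolding tau_def using enc_dec by auto
qed

lemma tau_inv: "a \<in> AA \<Longrightarrow> tau i j T (tau i j T a) = a"
  using tau_comp[of a T T] tau_empty by simp

lemma tau_sym: "a \<in> AA \<Longrightarrow> b \<in> AA \<Longrightarrow> (b = tau i j T a) = (a = tau i j T b)"
  using tau_inv by auto

lemma sum_symdiff:
  fixes g :: "nat set \<Rightarrow> real"
  assumes "T \<subseteq> U"
  shows "(\<Sum>T'\<in>Pow U. g ((T - T') \<union> (T' - T))) = (\<Sum>S\<in>Pow U. g S)"
  by (rule sum.reindex_bij_witness[where i="\<lambda>S. (T - S) \<union> (S - T)" and j="\<lambda>S. (T - S) \<union> (S - T)"])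
     (use assms in auto)

lemma swp_proj: "is_proj AA (swp i j y z)"
proof -
  have sym: "\<forall>a\<in>AA. \<forall>b\<in>AA. swp i j y z a b = swp i j y z b a"
    unfolding swp_def using tau_sym by (auto intro!: sum.cong simp: mult.commute)
  have "(\<Sum>e\<in>AA. swp i j y z a e * swp i j y z e b) = swp i j y z a b" if a: "a \<in> AA" and b: "b \<in> AA" for a b
  proof -
    let ?v = "vv i j y z"
    have "(\<Sum>e\<in>AA. swp i j y z a e * swp i j y z e b) =
       (\<Sum>e\<in>AA. \<Sum>T\<in>Pow {..<R}. \<Sum>T'\<in>Pow {..<R}.
          (if e = tau i j T a then ?v a * ?v e else 0) * (if b = tau i j T' e then ?v e * ?v b else 0)) / 2^R / 2^R"
      unfolding swp_def by (simp add: sum_product sum_divide_distrib)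
    also have "\<dots> = (\<Sum>T\<in>Pow {..<R}. \<Sum>T'\<in>Pow {..<R}. \<Sum>e\<in>AA.
          (if e = tau i j T a then ?v a * ?v e else 0) * (if b = tau i j T' e then ?v e * ?v b else 0)) / 2^R / 2^R"
      by (simp add: sum.swap[of _ AA] sum.swap[of _ AA "Pow {..<R}"])
    also have "\<dots> = (\<Sum>T\<in>Pow {..<R}. \<Sum>T'\<in>Pow {..<R}.
          (if b = tau i j ((T - T') \<union> (T' - T)) a then ?v a * ?v b else 0)) / 2^R / 2^R"
    proof -
      have "(\<Sum>e\<in>AA. (if e = tau i j T a then ?v a * ?v e else 0) * (if b = tau i j T' e then ?v e * ?v b else 0))
          = (if b = tau i j ((T - T') \<union> (T' - T)) a then ?v a * ?v b else 0)" for T T'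
      proof -
        have "(\<Sum>e\<in>AA. (if e = tau i j T a then ?v a * ?v e else 0) * (if b = tau i j T' e then ?v e * ?v b else 0))
           = (\<Sum>e\<in>AA. if e = tau i j T a then (?v a * ?v e) * (if b = tau i j T' e then ?v e * ?v b else 0) else 0)"
          by (rule sum.cong) auto
        also have "\<dots> = (?v a * ?v (tau i j T a)) * (if b = tau i j T' (tau i j T a) then ?v (tau i j T a) * ?v b else 0)"
          using tau_in[OF a] by (simp add: sum.delta')
        also have "\<dots> = (if b = tau i j ((T - T') \<union> (T' - T)) a then ?v a * ?v b else 0)"
          using tau_comp[OF a] by (auto simp: algebra_simps)
        finally show ?thesis .
      qed
      then show ?thesis by simp
    qed
    also have "\<dots> = (\<Sum>T\<in>Pow {..<R}. \<Sum>S\<in>Pow {..<R}. (if b = tau i j S a then ?v a * ?v b else 0)) / 2^R / 2^R"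
      by (rule arg_cong[where f="\<lambda>x. x / 2^R / 2^R"], rule sum.cong[OF refl])
         (rule sum_symdiff[where g="\<lambda>S. if b = tau i j S a then ?v a * ?v b else 0"], simp)
    also have "\<dots> = swp i j y z a b"
      unfolding swp_def by (simp add: card_Pow)
    finally show ?thesis .
  qed
  with sym show ?thesis unfolding is_proj_def by blast
qed

end

lemma pj_proj: "i < k \<Longrightarrow> j < k \<Longrightarrow> is_proj AA (pj i j y z)"
  unfolding pj_def using swp_proj is_proj_idm[OF finite_AA] is_proj_zero by auto

end

lemma prod_two:
  fixes F :: "nat \<Rightarrow> real"
  assumes "finite L" "i \<in> L" "j \<in> L" "i \<noteq> j"
  shows "(\<Prod>l\<in>L. F l) = F i * F j * (\<Prod>l\<in>L - {i, j}. F l)"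
proof -
  have "(\<Prod>l\<in>L. F l) = F i * (\<Prod>l\<in>L - {i}. F l)" using assms by (simp add: prod.remove)
  also have "(\<Prod>l\<in>L - {i}. F l) = F j * (\<Prod>l\<in>L - {i} - {j}. F l)"
    using assms by (intro prod.remove) auto
  moreover have "L - {i} - {j} = L - {i, j}" by auto
  ultimately show ?thesis by simp
qed

context fp begin

lemma bij_dec: "bij_betw dec {..<M} Tup"
proof (rule bij_betw_byWitness[where f'=enc])
  show "\<forall>a\<in>{..<M}. enc (dec a) = a" using enc_dec by blast
  show "\<forall>a'\<in>Tup. dec (enc a') = a'" using dec_enc by blast
  show "dec ` {..<M} \<subseteq> Tup" using dec_in by blast
  show "enc ` Tup \<subseteq> {..<M}" using enc_in by blast
qed

lemma sum_dec: "(\<Sum>d<M. h (dec d)) = (\<Sum>t\<in>Tup. h t)"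
  using sum.reindex_bij_betw[OF bij_dec, of h] by simp

lemma sum_G:
  fixes f :: "nat \<Rightarrow> real"
  assumes "T \<subseteq> {..<R}"
  shows "(\<Sum>d<M. \<Prod>r<R. if r \<in> T then f (dec d r) else 1) = (\<Sum>l<N. f l) ^ card T * real N ^ (R - card T)"
proof -
  have "(\<Sum>d<M. \<Prod>r<R. if r \<in> T then f (dec d r) else 1) = (\<Sum>t\<in>Tup. \<Prod>r<R. if r \<in> T then f (t r) else 1)"
    by (rule sum_dec)
  also have "\<dots> = (\<Prod>r<R. \<Sum>l<N. if r \<in> T then f l else 1)"
    using prod_sum_PiE[of "{..<R}" "\<lambda>_. {..<N}" "\<lambda>r l. if r \<in> T then f l else 1"] by simp
  also have "\<dots> = (\<Prod>r<R. if r \<in> T then (\<Sum>l<N. f l) else real N)"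
    by (rule prod.cong) auto
  also have "\<dots> = (\<Sum>l<N. f l) ^ card T * real N ^ (R - card T)"
  proof -
    have "{..<R} \<inter> {r. r \<in> T} = T" "{..<R} \<inter> - {r. r \<in> T} = {..<R} - T" using assms by auto
    moreover have "card ({..<R} - T) = R - card T" using assms by (simp add: card_Diff_subset finite_subset)
    ultimately show ?thesis by (simp add: prod.If_cases)
  qed
  finally show ?thesis .
qed

lemma sum_pair:
  fixes g :: "nat \<Rightarrow> real"
  assumes "i < k" "j < k" "i \<noteq> j"
  shows "(\<Sum>a\<in>AA. g (a i) * g (a j)) = (\<Sum>d<M. g d) ^ 2 * real M ^ (k - 2)"
proof -
  define H where "H l d = (if l = i \<or> l = j then g d else 1)" for l d
  have "(\<Prod>l<k. \<Sum>d<M. H l d) = (\<Sum>a\<in>AA. \<Prod>l<k. H l (a l))"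
    unfolding AA_def by (rule prod_sum_PiE) auto
  also have "\<dots> = (\<Sum>a\<in>AA. g (a i) * g (a j))"
  proof (rule sum.cong[OF refl])
    fix a
    have "(\<Prod>l<k. H l (a l)) = H i (a i) * H j (a j) * (\<Prod>l\<in>{..<k} - {i, j}. H l (a l))"
      using assms by (intro prod_two) auto
    also have "(\<Prod>l\<in>{..<k} - {i, j}. H l (a l)) = 1" unfolding H_def by (rule prod.neutral) auto
    finally show "(\<Prod>l<k. H l (a l)) = g (a i) * g (a j)" unfolding H_def by simp
  qed
  finally have e: "(\<Sum>a\<in>AA. g (a i) * g (a j)) = (\<Prod>l<k. \<Sum>d<M. H l d)" ..
  have "(\<Prod>l<k. \<Sum>d<M. H l d) = (\<Sum>d<M. H i d) * (\<Sum>d<M. H j d) * (\<Prod>l\<in>{..<k} - {i, j}. \<Sum>d<M. H l d)"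
    using assms by (intro prod_two) auto
  also have "(\<Prod>l\<in>{..<k} - {i, j}. \<Sum>d<M. H l d) = (\<Prod>l\<in>{..<k} - {i, j}. real M)"
    unfolding H_def by (rule prod.cong) auto
  also have "\<dots> = real M ^ (k - 2)"
    using assms by (simp add: card_Diff_subset numeral_2_eq_2)
  finally show ?thesis unfolding e H_def by (simp add: power2_eq_square)
qed

lemma norm_psi:
  assumes "\<forall>l<k. x l \<in> bitstrings n"
  shows "(L2_set (psi x) AA)\<^sup>2 = 1"
proof -
  have "(L2_set (psi x) AA)\<^sup>2 = (\<Sum>a\<in>AA. (psi x a)\<^sup>2)" by (rule L2_sq)
  also have "\<dots> = (\<Sum>a\<in>AA. (1 / real M) ^ k)"
  proof (rule sum.cong[OF refl])
    fix a
    have "(psi x a)\<^sup>2 = (\<Prod>l<k. phi (x l) (a l) * phi (x l) (a l))"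
      unfolding psi_def power2_eq_square by (simp add: prod.distrib)
    also have "\<dots> = (\<Prod>l<k. 1 / real M)"
      unfolding phi_def by (rule prod.cong) (auto simp: field_simps)
    finally show "(psi x a)\<^sup>2 = (1 / real M) ^ k" by simp
  qed
  also have "\<dots> = 1" unfolding AA_def by (simp add: card_PiE field_simps)
  finally show ?thesis .
qed

end

context fp begin

definition chi :: "(nat \<Rightarrow> bits) \<Rightarrow> nat \<Rightarrow> nat \<Rightarrow> bits \<Rightarrow> bits \<Rightarrow> nat \<Rightarrow> real" where
  "chi x i j y z l = sg ((dotp (c l) (x i) \<noteq> dotp (c l) y) \<noteq> (dotp (c l) (x j) \<noteq> dotp (c l) z))"

definition GG :: "(nat \<Rightarrow> bits) \<Rightarrow> nat \<Rightarrow> nat \<Rightarrow> bits \<Rightarrow> bits \<Rightarrow> nat set \<Rightarrow> nat \<Rightarrow> real" where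
  "GG x i j y z T d = (\<Prod>r<R. if r \<in> T then chi x i j y z (dec d r) else 1)"

lemma sg_eq: "sg a = sg b \<longleftrightarrow> a = b" unfolding sg_def by auto
lemma sg_one: "sg a = 1 \<longleftrightarrow> \<not> a" unfolding sg_def by auto

context
  fixes i j assumes ij: "i < k" "j < k" "i \<noteq> j"
begin

lemma pointwise:
  assumes a: "a \<in> AA"
  shows "psi x a * psi x (tau i j T a) * (vv i j y z a * vv i j y z (tau i j T a)) =
    GG x i j y z T (a i) * GG x i j y z T (a j) / real M ^ k"
proof -
  define a' where "a' = tau i j T a"
  define t where "t = dec (a i)"
  define t' where "t' = dec (a j)"
  have da': "dec (a' i) = mix T t t'" "dec (a' j) = mix T t' t"
    using dec_tau[OF ij a] unfolding a'_def t_def t'_def by auto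
  have sM: "sqrt (real M) * sqrt (real M) = real M" by simp
  have "psi x a * psi x a' = (\<Prod>l<k. sig (x l) (a l) * sig (x l) (a' l) / real M)"
    unfolding psi_def phi_def prod.distrib[symmetric]
    by (rule prod.cong[OF refl]) (simp add: sM[symmetric])
  also have "\<dots> = (\<Prod>l<k. sig (x l) (a l) * sig (x l) (a' l)) / real M ^ k"
    by (simp add: prod_dividef)
  also have "(\<Prod>l<k. sig (x l) (a l) * sig (x l) (a' l)) =
     (sig (x i) (a i) * sig (x i) (a' i)) * (sig (x j) (a j) * sig (x j) (a' j)) *
     (\<Prod>l\<in>{..<k} - {i, j}. sig (x l) (a l) * sig (x l) (a' l))"
    using ij by (intro prod_two) auto
  also have "(\<Prod>l\<in>{..<k} - {i, j}. sig (x l) (a l) * sig (x l) (a' l)) = 1"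
    by (rule prod.neutral) (auto simp: a'_def tau_other[OF ij])
  finally have e1: "psi x a * psi x a' = sig (x i) (a i) * sig (x i) (a' i) * (sig (x j) (a j) * sig (x j) (a' j)) / real M ^ k"
    by simp
  let ?f = "\<lambda>r. (sg (dotp (c (t r)) (x i)) * sg (dotp (c (mix T t t' r)) (x i))) *
               (sg (dotp (c (t' r)) (x j)) * sg (dotp (c (mix T t' t r)) (x j))) *
               (sg (dotp (c (t r)) y) * sg (dotp (c (t' r)) z)) *
               (sg (dotp (c (mix T t t' r)) y) * sg (dotp (c (mix T t' t r)) z))"
  have e2: "sig (x i) (a i) * sig (x i) (a' i) * (sig (x j) (a j) * sig (x j) (a' j)) * (vv i j y z a * vv i j y z a')
     = (\<Prod>r<R. ?f r)"
    unfolding vv_def sig_def t_def[symmetric] t'_def[symmetric] da' by (simp add: prod.distrib)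
  have e3: "(\<Prod>r<R. ?f r) = GG x i j y z T (a i) * GG x i j y z T (a j)"
    unfolding GG_def t_def[symmetric] t'_def[symmetric] prod.distrib[symmetric]
  proof (rule prod.cong[OF refl])
    fix r
    show "?f r = (if r \<in> T then chi x i j y z (t r) else 1) * (if r \<in> T then chi x i j y z (t' r) else 1)"
    proof (cases "r \<in> T")
      case True
      then show ?thesis unfolding chi_def mix_def
        by (simp only: if_True mult.assoc sg_neq[symmetric] sg_eq) argo
    next
      case False
      then show ?thesis unfolding chi_def mix_def
        by (simp only: if_False mult.assoc sg_neq[symmetric] sg_one mult_1) argo
    qed
  qed
  define S where "S = sig (x i) (a i) * sig (x i) (a' i) * (sig (x j) (a j) * sig (x j) (a' j))"
  define V where "V = vv i j y z a * vv i j y z a'"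
  have "psi x a * psi x a' * V = S / real M ^ k * V" unfolding e1 S_def by (rule refl)
  also have "\<dots> = (S * V) / real M ^ k" by simp
  also have "S * V = GG x i j y z T (a i) * GG x i j y z T (a j)" unfolding S_def V_def e2 e3 by (rule refl)
  finally show ?thesis unfolding V_def a'_def .
qed

lemma inner_swp:
  assumes a: "a \<in> AA"
  shows "(\<Sum>b\<in>AA. psi x a * psi x b * swp i j y z a b) =
     (\<Sum>T\<in>Pow {..<R}. psi x a * psi x (tau i j T a) * (vv i j y z a * vv i j y z (tau i j T a))) / 2 ^ R"
proof -
  have "(\<Sum>b\<in>AA. psi x a * psi x b * swp i j y z a b) =
     (\<Sum>b\<in>AA. \<Sum>T\<in>Pow {..<R}. if b = tau i j T a then psi x a * psi x b * (vv i j y z a * vv i j y z b) else 0) / 2 ^ R"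
  proof -
    have "psi x a * psi x b * swp i j y z a b =
      (\<Sum>T\<in>Pow {..<R}. if b = tau i j T a then psi x a * psi x b * (vv i j y z a * vv i j y z b) else 0) / 2 ^ R" for b
    proof -
      have "psi x a * psi x b * (\<Sum>T\<in>Pow {..<R}. if b = tau i j T a then vv i j y z a * vv i j y z b else 0) =
        (\<Sum>T\<in>Pow {..<R}. if b = tau i j T a then psi x a * psi x b * (vv i j y z a * vv i j y z b) else 0)"
        unfolding sum_distrib_left by (rule sum.cong) auto
      then show ?thesis unfolding swp_def by simp
    qed
    then show ?thesis by (simp add: sum_divide_distrib)
  qed
  also have "\<dots> = (\<Sum>T\<in>Pow {..<R}. \<Sum>b\<in>AA. if b = tau i j T a then psi x a * psi x b * (vv i j y z a * vv i j y z b) else 0) / 2 ^ R"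
    by (subst sum.swap) (rule refl)
  also have "\<dots> = (\<Sum>T\<in>Pow {..<R}. psi x a * psi x (tau i j T a) * (vv i j y z a * vv i j y z (tau i j T a))) / 2 ^ R"
    using tau_in[OF ij a] by (simp add: sum.delta')
  finally show ?thesis .
qed

lemma ip_swp:
  "ip AA (psi x) (swp i j y z) = ((1 + ((\<Sum>l<N. chi x i j y z l) / real N)\<^sup>2) / 2) ^ R"
proof -
  define S where "S = (\<Sum>l<N. chi x i j y z l)"
  define \<beta> where "\<beta> = S / real N"
  have k2: "k \<ge> 2" using ij by auto
  have MN: "real M = real N ^ R" by (simp add: power_mult)
  have Npos: "real N > 0" by simp
  have "ip AA (psi x) (swp i j y z) = (\<Sum>a\<in>AA. \<Sum>b\<in>AA. psi x a * psi x b * swp i j y z a b)"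
    unfolding ip_def by simp
  also have "\<dots> = (\<Sum>a\<in>AA. \<Sum>T\<in>Pow {..<R}. GG x i j y z T (a i) * GG x i j y z T (a j) / real M ^ k) / 2 ^ R"
  proof -
    have "(\<Sum>a\<in>AA. \<Sum>b\<in>AA. psi x a * psi x b * swp i j y z a b) =
      (\<Sum>a\<in>AA. (\<Sum>T\<in>Pow {..<R}. GG x i j y z T (a i) * GG x i j y z T (a j) / real M ^ k) / 2 ^ R)"
      by (rule sum.cong[OF refl]) (simp add: inner_swp pointwise)
    then show ?thesis by (simp add: sum_divide_distrib)
  qed
  also have "\<dots> = (\<Sum>T\<in>Pow {..<R}. (\<Sum>a\<in>AA. GG x i j y z T (a i) * GG x i j y z T (a j)) / real M ^ k) / 2 ^ R"
    by (subst sum.swap) (simp add: sum_divide_distrib)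
  also have "\<dots> = (\<Sum>T\<in>Pow {..<R}. (\<beta>\<^sup>2) ^ card T) / 2 ^ R"
  proof -
    have "(\<Sum>a\<in>AA. GG x i j y z T (a i) * GG x i j y z T (a j)) / real M ^ k = (\<beta>\<^sup>2) ^ card T"
      if T: "T \<in> Pow {..<R}" for T
    proof -
      have TR: "T \<subseteq> {..<R}" using T by auto
      have ct: "card T \<le> R" using card_mono[OF _ TR] by simp
      have "(\<Sum>a\<in>AA. GG x i j y z T (a i) * GG x i j y z T (a j)) = (\<Sum>d<M. GG x i j y z T d) ^ 2 * real M ^ (k - 2)"
        by (rule sum_pair[OF ij])
      also have "(\<Sum>d<M. GG x i j y z T d) = S ^ card T * real N ^ (R - card T)"
        unfolding GG_def S_def by (rule sum_G[OF TR])
      finally have e: "(\<Sum>a\<in>AA. GG x i j y z T (a i) * GG x i j y z T (a j)) = (S ^ card T * real N ^ (R - card T)) ^ 2 * real M ^ (k - 2)" .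
      have Mk: "real M ^ k = real M ^ (k - 2) * real M ^ 2"
        using k2 by (metis le_add_diff_inverse2 power_add)
      have "S ^ card T * real N ^ (R - card T) = \<beta> ^ card T * real N ^ R"
        using ct Npos unfolding \<beta>_def by (simp add: power_divide field_simps power_add[symmetric])
      then have "S ^ card T * real N ^ (R - card T) = \<beta> ^ card T * real M" unfolding MN .
      then have "(\<Sum>a\<in>AA. GG x i j y z T (a i) * GG x i j y z T (a j)) / real M ^ k =
           (\<beta> ^ card T * real M) ^ 2 * real M ^ (k - 2) / (real M ^ (k - 2) * real M ^ 2)"
        unfolding e Mk by simp
      also have "\<dots> = (\<beta> ^ card T) ^ 2"
        by (simp add: power_mult_distrib)
      also have "\<dots> = (\<beta>\<^sup>2) ^ card T" by (simp add: power_mult[symmetric] mult.commute)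
      finally show ?thesis .
    qed
    then show ?thesis by (intro arg_cong[where f="\<lambda>x. x / 2 ^ R"] sum.cong) auto
  qed
  also have "(\<Sum>T\<in>Pow {..<R}. (\<beta>\<^sup>2) ^ card T) = (1 + \<beta>\<^sup>2) ^ R"
    using prod_add[of "{..<R}" "\<lambda>_. \<beta>\<^sup>2" "\<lambda>_. 1"] by (simp add: add.commute)
  finally show ?thesis unfolding \<beta>_def S_def by (simp add: power_divide)
qed

end

end

context fp begin

lemma bits_len: "w \<in> bitstrings n \<Longrightarrow> length w = n" unfolding bitstrings_def by simp

lemma chi_xor:
  assumes "x i \<in> bitstrings n" "x j \<in> bitstrings n" "y \<in> bitstrings n" "z \<in> bitstrings n"
  shows "chi x i j y z l = sg (dotp (c l) (xor_bits (x i) y) \<noteq> dotp (c l) (xor_bits (x j) z))"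
  unfolding chi_def using assms by (simp add: dotp_xor bits_len)

lemma sum_sg: "(\<Sum>l<N. sg (P l)) = real N - 2 * real (card {l\<in>{..<N}. P l})"
proof -
  have "(\<Sum>l<N. sg (P l)) = (\<Sum>l<N. 1 - 2 * (if P l then 1 else 0))"
    unfolding sg_def by (rule sum.cong) auto
  also have "\<dots> = real N - 2 * (\<Sum>l<N. (if P l then 1 else 0))"
    by (simp add: sum_subtractf sum_distrib_left)
  also have "(\<Sum>l<N. (if P l then 1 else 0::real)) = real (card {l\<in>{..<N}. P l})"
    by (simp add: sum.inter_filter[symmetric])
  finally show ?thesis .
qed

lemma node_err:
  assumes x: "\<forall>l<k. x l \<in> bitstrings n" and ij: "i < k" "j < k" and yz: "y \<in> bitstrings n" "z \<in> bitstrings n"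
  shows "L2_set (\<lambda>a. mv AA (if xor_bits (x i) y = xor_bits (x j) z then pj i j y z else cmp (pj i j y z)) (psi x) a - psi x a) AA
      \<le> sqrt ((5/8) ^ R)"
proof (cases "i = j")
  case True
  have cy: "(xor_bits (x i) y = xor_bits (x j) z) = (y = z)"
    using True xor_cancel x ij yz by (simp add: bits_len)
  have "\<forall>a\<in>AA. mv AA (if xor_bits (x i) y = xor_bits (x j) z then pj i j y z else cmp (pj i j y z)) (psi x) a - psi x a = 0"
  proof
    fix a assume a: "a \<in> AA"
    show "mv AA (if xor_bits (x i) y = xor_bits (x j) z then pj i j y z else cmp (pj i j y z)) (psi x) a - psi x a = 0"
    proof (cases "y = z")
      case True
      then show ?thesis unfolding cy pj_def using \<open>i = j\<close> a by (simp add: mv_def sum_idm_left)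
    next
      case False
      then show ?thesis unfolding cy pj_def using \<open>i = j\<close> a by (simp add: mv_cmp) (simp add: mv_def)
    qed
  qed
  then show ?thesis by (simp add: L2_set_0')
next
  case False
  have ij': "i < k" "j < k" "i \<noteq> j" using ij False by auto
  have w: "xor_bits (x i) y \<in> bitstrings n" "xor_bits (x j) z \<in> bitstrings n"
    using x ij yz unfolding bitstrings_def by auto
  have pjs: "pj i j y z = swp i j y z" unfolding pj_def using False by simp
  have pr: "is_proj AA (swp i j y z)" by (rule swp_proj[OF ij'])
  have nrm: "(L2_set (psi x) AA)\<^sup>2 = 1" by (rule norm_psi[OF x])
  define S where "S = (\<Sum>l<N. chi x i j y z l)"
  have ipf: "ip AA (psi x) (swp i j y z) = ((1 + (S / real N)\<^sup>2) / 2) ^ R"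
    unfolding S_def by (rule ip_swp[OF ij'])
  show ?thesis
  proof (cases "xor_bits (x i) y = xor_bits (x j) z")
    case True
    have "S = real N" unfolding S_def using True x ij yz by (simp add: chi_xor sg_def)
    then have "ip AA (psi x) (swp i j y z) = 1" unfolding ipf by simp
    then have "(L2_set (\<lambda>a. mv AA (swp i j y z) (psi x) a - psi x a) AA)\<^sup>2 = 0"
      using proj_err[OF finite_AA pr] nrm by simp
    then show ?thesis using True pjs by simp
  next
    case F: False
    have cg: "N \<le> 4 * cnt N c (xor_bits (x i) y) (xor_bits (x j) z) \<and> 4 * cnt N c (xor_bits (x i) y) (xor_bits (x j) z) \<le> 3 * N"
      by (rule c_good[OF w F])
    have "S = real N - 2 * real (cnt N c (xor_bits (x i) y) (xor_bits (x j) z))"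
      unfolding S_def cnt_def using x ij yz by (simp add: chi_xor sum_sg)
    then have "\<bar>S\<bar> \<le> real N / 2" using cg by linarith
    moreover have Np: "real N > 0" by simp
    ultimately have "\<bar>S / real N\<bar> \<le> 1 / 2" by (simp add: divide_le_eq)
    then have "\<bar>S / real N\<bar>\<^sup>2 \<le> (1 / 2)\<^sup>2" by (intro power_mono) auto
    then have "(S / real N)\<^sup>2 \<le> (1 / 2)\<^sup>2" by (simp only: power2_abs)
    then have "(S / real N)\<^sup>2 \<le> 1 / 4" by (simp add: power2_eq_square)
    then have Z: "ip AA (psi x) (swp i j y z) \<le> (5/8) ^ R"
      unfolding ipf by (intro power_mono) auto
    have "(L2_set (\<lambda>a. mv AA (cmp (swp i j y z)) (psi x) a - psi x a) AA)\<^sup>2 = ip AA (psi x) (swp i j y z)"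
      using proj_err[OF finite_AA is_proj_cmp[OF finite_AA pr]] ip_cmp[OF finite_AA] nrm by simp
    then have "(L2_set (\<lambda>a. mv AA (cmp (swp i j y z)) (psi x) a - psi x a) AA)\<^sup>2 \<le> (5/8) ^ R" using Z by simp
    then have "L2_set (\<lambda>a. mv AA (cmp (swp i j y z)) (psi x) a - psi x a) AA \<le> sqrt ((5/8) ^ R)"
      using real_le_rsqrt by blast
    then show ?thesis using F pjs by simp
  qed
qed

end

lemma psd_real:
  assumes "\<forall>a\<in>A. \<forall>b\<in>A. X a b = X b a" "\<And>u. 0 \<le> qf A X u"
  shows "psd_on A (\<lambda>a b. complex_of_real (X a b))"
  unfolding psd_on_def
proof (intro conjI allI ballI)
  fix a b assume "a \<in> A" "b \<in> A"
  then show "complex_of_real (X a b) = cnj (complex_of_real (X b a))" using assms(1) by simp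
next
  fix v :: "'a \<Rightarrow> complex"
  have "Re (\<Sum>a\<in>A. \<Sum>b\<in>A. cnj (v a) * complex_of_real (X a b) * v b) =
     (\<Sum>a\<in>A. \<Sum>b\<in>A. Re (v a) * X a b * Re (v b)) + (\<Sum>a\<in>A. \<Sum>b\<in>A. Im (v a) * X a b * Im (v b))"
    by (simp add: sum.distrib[symmetric] algebra_simps)
  also have "\<dots> = qf A X (\<lambda>a. Re (v a)) + qf A X (\<lambda>a. Im (v a))" unfolding qf_def by simp
  also have "\<dots> \<ge> 0" using assms(2) by simp
  finally show "0 \<le> Re (\<Sum>a\<in>A. \<Sum>b\<in>A. cnj (v a) * complex_of_real (X a b) * v b)" .
qed

lemma wf_nodes: "meq_wf k n T \<Longrightarrow> (i, j, y, z) \<in> nodes T \<Longrightarrow> i < k \<and> j < k \<and> length y = n \<and> length z = n"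
  by (induction T) auto

context fp begin

definition prot :: "'s meq_tree \<Rightarrow> 's smp_protocol" where
  "prot T = \<lparr>qubits = (\<lambda>l. m * R),
             msg = (\<lambda>l w a b. complex_of_real (phi w a * phi w b)),
             referee = (\<lambda>s a b. complex_of_real (Eop AA pj T idm s a b))\<rparr>"

lemma js: "joint_space k (prot T) = AA"
  unfolding joint_space_def prot_def AA_def by simp

lemma cost: "smp_cost k (prot T) = k * (m * R)"
  unfolding smp_cost_def prot_def by simp

lemma phi_sq: "phi w d * phi w d = 1 / real M"
proof -
  have "phi w d * phi w d = (sig w d * sig w d) / (sqrt (real M) * sqrt (real M))"
    unfolding phi_def by simp
  then show ?thesis by simp
qed

lemma valid:
  assumes wf: "meq_wf k n T"
  shows "valid_smp k n (prot T)"
  unfolding valid_smp_def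
proof (intro conjI allI impI ballI)
  fix l w
  show "density_on {..<2 ^ qubits (prot T) l} (msg (prot T) l w)"
    unfolding density_on_def
  proof
    have "psd_on {..<M} (\<lambda>a b. complex_of_real (phi w a * phi w b))"
    proof (rule psd_real)
      fix u
      have "qf {..<M} (\<lambda>a b. phi w a * phi w b) u = (\<Sum>a<M. u a * phi w a) * (\<Sum>b<M. phi w b * u b)"
        unfolding qf_def by (simp add: sum_product algebra_simps)
      also have "\<dots> = (\<Sum>a<M. u a * phi w a)\<^sup>2" by (simp add: power2_eq_square mult.commute)
      finally show "0 \<le> qf {..<M} (\<lambda>a b. phi w a * phi w b) u" by simp
    qed auto
    then show "psd_on {..<2 ^ qubits (prot T) l} (msg (prot T) l w)" unfolding prot_def by simp
    have "(\<Sum>a<M. complex_of_real (phi w a * phi w a)) = 1"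
      unfolding phi_sq by simp
    then show "(\<Sum>a\<in>{..<2 ^ qubits (prot T) l}. msg (prot T) l w a a) = 1" unfolding prot_def by simp
  qed
next
  have np: "\<forall>(i,j,y,z)\<in>nodes T. is_proj AA (pj i j y z)"
    using wf_nodes[OF wf] pj_proj by auto
  show "povm_on (joint_space k (prot T)) (referee (prot T))"
    unfolding js povm_on_def
  proof (intro conjI allI)
    fix s
    show "psd_on AA (referee (prot T) s)"
      unfolding prot_def using Eop_sym Eop_qf by (auto intro!: psd_real)
  next
    show "\<exists>F. finite F \<and> (\<forall>s. s \<notin> F \<longrightarrow> (\<forall>a\<in>AA. \<forall>b\<in>AA. referee (prot T) s a b = 0)) \<and>
          (\<forall>a\<in>AA. \<forall>b\<in>AA. (\<Sum>s\<in>F. referee (prot T) s a b) = (if a = b then 1 else 0))"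
    proof (intro exI[of _ "leaves T"] conjI allI impI ballI)
      show "finite (leaves T)" by (rule finite_leaves)
    next
      fix s a b assume "s \<notin> leaves T"
      then show "referee (prot T) s a b = 0" unfolding prot_def by (simp add: Eop_out)
    next
      fix a b assume ab: "a \<in> AA" "b \<in> AA"
      have "(\<Sum>s\<in>leaves T. Eop AA pj T idm s a b) = gram AA idm a b"
        by (rule Eop_sum[OF finite_AA np finite_leaves subset_refl ab])
      also have "\<dots> = idm a b"
      proof -
        have "gram AA idm a b = (\<Sum>c\<in>AA. idm a c * idm c b)"
          unfolding gram_def by (rule sum.cong) (auto simp: idm_def)
        then show ?thesis using sum_idm_left[OF finite_AA ab(1)] by simp
      qed
      finally show "(\<Sum>s\<in>leaves T. referee (prot T) s a b) = (if a = b then 1 else 0)"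
        unfolding prot_def idm_def by (simp flip: of_real_sum)
    qed
  qed
qed

lemma outp: "output_prob k (prot T) x s = qf AA (Eop AA pj T idm s) (psi x)"
proof -
  have jst: "joint_state k (prot T) x b a = complex_of_real (psi x b * psi x a)" for a b
    unfolding joint_state_def prot_def psi_def by (simp add: prod.distrib)
  show ?thesis
    unfolding output_prob_def js jst qf_def
    by (simp add: prot_def algebra_simps flip: of_real_mult)
qed

end

context fp begin

lemma success:
  assumes wf: "meq_wf k n T" and x: "x \<in> smp_inputs k n"
  shows "1 - 2 * real (meq_depth T) * sqrt ((5/8) ^ R) \<le> output_prob k (prot T) x (meq_eval T x)"
proof -
  define \<epsilon> where "\<epsilon> = sqrt ((5/8::real) ^ R)"
  define D where "D = real (meq_depth T)"
  have xb: "\<forall>l<k. x l \<in> bitstrings n" using x unfolding smp_inputs_def by auto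
  have H: "\<forall>(i,j,y,z)\<in>nodes T. is_proj AA (pj i j y z) \<and>
       L2_set (\<lambda>a. mv AA (if xor_bits (x i) y = xor_bits (x j) z then pj i j y z else cmp (pj i j y z)) (psi x) a - psi x a) AA \<le> \<epsilon>"
  proof (clarify)
    fix i j y z assume "(i, j, y, z) \<in> nodes T"
    then have "i < k" "j < k" "y \<in> bitstrings n" "z \<in> bitstrings n"
      using wf_nodes[OF wf] unfolding bitstrings_def by auto
    then show "is_proj AA (pj i j y z) \<and>
       L2_set (\<lambda>a. mv AA (if xor_bits (x i) y = xor_bits (x j) z then pj i j y z else cmp (pj i j y z)) (psi x) a - psi x a) AA \<le> \<epsilon>"
      using pj_proj node_err[OF xb] unfolding \<epsilon>_def by auto
  qed
  obtain M0 where M1: "(L2_set (mv AA M0 (psi x)) AA)\<^sup>2 \<le> qf AA (Eop AA pj T idm (meq_eval T x)) (psi x)"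
    and M2: "L2_set (\<lambda>a. mv AA M0 (psi x) a - psi x a) AA \<le> L2_set (\<lambda>a. mv AA idm (psi x) a - psi x a) AA + D * \<epsilon>"
    using path_lemma[OF finite_AA _ H, of idm] unfolding D_def \<epsilon>_def by auto
  have "L2_set (\<lambda>a. mv AA idm (psi x) a - psi x a) AA = 0"
    by (rule L2_set_0') (simp add: mv_def sum_idm_left)
  then have M2': "L2_set (\<lambda>a. mv AA M0 (psi x) a - psi x a) AA \<le> D * \<epsilon>" using M2 by simp
  have n1: "L2_set (psi x) AA = 1" using norm_psi[OF xb] L2_set_nonneg[of "psi x" AA] by (simp add: power2_eq_1_iff)
  have "L2_set (psi x) AA \<le> L2_set (mv AA M0 (psi x)) AA + L2_set (\<lambda>a. psi x a - mv AA M0 (psi x) a) AA"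
    using L2_set_triangle_ineq[of "mv AA M0 (psi x)" "\<lambda>a. psi x a - mv AA M0 (psi x) a" AA] by simp
  also have "L2_set (\<lambda>a. psi x a - mv AA M0 (psi x) a) AA = L2_set (\<lambda>a. mv AA M0 (psi x) a - psi x a) AA"
    unfolding L2_set_def by (simp add: power2_commute)
  finally have lb: "1 - D * \<epsilon> \<le> L2_set (mv AA M0 (psi x)) AA" using n1 M2' by simp
  have D0: "0 \<le> D" "0 \<le> \<epsilon>" unfolding D_def \<epsilon>_def by auto
  have q0: "0 \<le> qf AA (Eop AA pj T idm (meq_eval T x)) (psi x)" by (rule Eop_qf)
  have "1 - 2 * D * \<epsilon> \<le> qf AA (Eop AA pj T idm (meq_eval T x)) (psi x)"
  proof (cases "1 - D * \<epsilon> \<le> 0")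
    case True
    have "0 \<le> D * \<epsilon>" using D0 by simp
    then show ?thesis using q0 True by linarith
  next
    case False
    then have "(1 - D * \<epsilon>)\<^sup>2 \<le> (L2_set (mv AA M0 (psi x)) AA)\<^sup>2"
      using lb by (intro power_mono) auto
    moreover have "1 - 2 * D * \<epsilon> \<le> (1 - D * \<epsilon>)\<^sup>2"
    proof -
      have "(1 - D * \<epsilon>)\<^sup>2 = 1 - 2 * D * \<epsilon> + (D * \<epsilon>)\<^sup>2" by (simp add: power2_eq_square algebra_simps)
      moreover have "0 \<le> (D * \<epsilon>)\<^sup>2" by simp
      ultimately show ?thesis by linarith
    qed
    ultimately show ?thesis using M1 by linarith
  qed
  then show ?thesis unfolding outp D_def \<epsilon>_def .
qed

end

lemma fp_exists:
  assumes n1: "n \<ge> 1" and m2: "m \<ge> 2" and K: "8 * n \<le> 2 ^ (m - 2)"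
  shows "\<exists>c dec enc. fp n m R c dec enc"
proof -
  have N4: "(2::nat) ^ m = 4 * 2 ^ (m - 2)"
  proof -
    have "m = (m - 2) + 2" using m2 by simp
    then have "(2::nat) ^ m = 2 ^ (m - 2) * 2 ^ 2" by (metis power_add)
    then show ?thesis by simp
  qed
  obtain c where c: "c \<in> PiE {..<4 * 2 ^ (m - 2)} (\<lambda>_. bitstrings n)" and
    cg: "\<forall>w1\<in>bitstrings n. \<forall>w2\<in>bitstrings n. w1 \<noteq> w2 \<longrightarrow>
        2 ^ (m - 2) \<le> cnt (4 * 2 ^ (m - 2)) c w1 w2 \<and> cnt (4 * 2 ^ (m - 2)) c w1 w2 \<le> 3 * 2 ^ (m - 2)"
    using code_exists[OF n1 K] by blast
  have "card (PiE {..<R} (\<lambda>_. {..<(2::nat) ^ m})) = card {..<(2::nat) ^ (m * R)}"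
    by (simp add: card_PiE power_mult)
  then obtain h where h: "bij_betw h {..<(2::nat) ^ (m * R)} (PiE {..<R} (\<lambda>_. {..<(2::nat) ^ m}))"
    by (metis finite_lessThan finite_PiE finite_same_card_bij)
  have "fp n m R c h (inv_into {..<2 ^ (m * R)} h)"
  proof
    show "\<And>l. l < 2 ^ m \<Longrightarrow> c l \<in> bitstrings n" using c N4 by auto
    show "\<And>w1 w2. w1 \<in> bitstrings n \<Longrightarrow> w2 \<in> bitstrings n \<Longrightarrow> w1 \<noteq> w2 \<Longrightarrow>
      2 ^ m \<le> 4 * cnt (2 ^ m) c w1 w2 \<and> 4 * cnt (2 ^ m) c w1 w2 \<le> 3 * 2 ^ m"
      using cg N4 by fastforce
    show "\<And>d. d < 2 ^ (m * R) \<Longrightarrow> h d \<in> PiE {..<R} (\<lambda>_. {..<2 ^ m})"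
      using h by (auto simp: bij_betw_def)
    show "\<And>t. t \<in> PiE {..<R} (\<lambda>_. {..<2 ^ m}) \<Longrightarrow> inv_into {..<2 ^ (m * R)} h t < 2 ^ (m * R)"
      using h by (metis bij_betw_def inv_into_into lessThan_iff)
    show "\<And>d. d < 2 ^ (m * R) \<Longrightarrow> inv_into {..<2 ^ (m * R)} h (h d) = d"
      using h by (simp add: bij_betw_inv_into_left)
    show "\<And>t. t \<in> PiE {..<R} (\<lambda>_. {..<2 ^ m}) \<Longrightarrow> h (inv_into {..<2 ^ (m * R)} h t) = t"
      using h by (simp add: bij_betw_inv_into_right)
  qed
  then show ?thesis by blast
qed

lemma eval_leaves: "meq_eval T x \<in> leaves T"
  by (induction T) auto

lemma leaves_ne: "leaves T \<noteq> {}"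
  by (induction T) auto

lemma depth0: "meq_depth T = 0 \<Longrightarrow> \<exists>s. T = Leaf s"
  by (cases T) auto

lemma depth1_card: "meq_depth T = 1 \<Longrightarrow> card (leaves T) \<le> 2"
proof (cases T)
  case (Leaf s) then show ?thesis by simp
next
  case (Node i j y z l r)
  assume "meq_depth T = 1"
  then have "meq_depth l = 0" "meq_depth r = 0" using Node by auto
  then obtain a b where "l = Leaf a" "r = Leaf b" using depth0 by blast
  then show ?thesis using Node by (simp add: card_insert_if)
qed

definition prot0 :: "'s meq_tree \<Rightarrow> 's smp_protocol" where
  "prot0 T = \<lparr>qubits = (\<lambda>l. 0), msg = (\<lambda>l w a b. 1),
      referee = (\<lambda>s a b. if a = b \<and> s \<in> leaves T then complex_of_real (1 / real (card (leaves T))) else 0)\<rparr>"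

lemma prot0_valid: "valid_smp k n (prot0 T)"
  unfolding valid_smp_def
proof (intro conjI allI impI ballI)
  fix l w
  have "psd_on {..<1::nat} (\<lambda>a b. complex_of_real ((\<lambda>a b. 1) a b))"
  proof (rule psd_real)
    fix u show "0 \<le> qf {..<1::nat} (\<lambda>a b. 1) u" unfolding qf_def by simp
  qed simp
  then show "density_on {..<2 ^ qubits (prot0 T) l} (msg (prot0 T) l w)"
    unfolding density_on_def prot0_def by simp
next
  define L where "L = real (card (leaves T))"
  have Lp: "L > 0" unfolding L_def using leaves_ne[of T] finite_leaves[of T] by (simp add: card_gt_0_iff)
  show "povm_on (joint_space k (prot0 T)) (referee (prot0 T))"
    unfolding povm_on_def
  proof (intro conjI allI exI[of _ "leaves T"])
    fix s
    have "psd_on (joint_space k (prot0 T)) (\<lambda>a b. complex_of_real ((\<lambda>a b. if a = b \<and> s \<in> leaves T then 1 / L else 0) a b))"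
    proof (rule psd_real)
      fix u
      have "qf (joint_space k (prot0 T)) (\<lambda>a b. if a = b \<and> s \<in> leaves T then 1 / L else 0) u =
        (\<Sum>a\<in>joint_space k (prot0 T). if s \<in> leaves T then u a * u a / L else 0)"
        unfolding qf_def
      proof (rule sum.cong[OF refl])
        fix a assume a: "a \<in> joint_space k (prot0 T)"
        have f: "finite (joint_space k (prot0 T))" unfolding joint_space_def by (simp add: finite_PiE)
        have "(\<Sum>b\<in>joint_space k (prot0 T). u a * (if a = b \<and> s \<in> leaves T then 1 / L else 0) * u b) =
          (\<Sum>b\<in>joint_space k (prot0 T). if a = b then (if s \<in> leaves T then u a * u a / L else 0) else 0)"
          by (rule sum.cong) auto
        then show "(\<Sum>b\<in>joint_space k (prot0 T). u a * (if a = b \<and> s \<in> leaves T then 1 / L else 0) * u b) =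
          (if s \<in> leaves T then u a * u a / L else 0)" using f a by simp
      qed
      also have "\<dots> \<ge> 0" using Lp by (intro sum_nonneg) auto
      finally show "0 \<le> qf (joint_space k (prot0 T)) (\<lambda>a b. if a = b \<and> s \<in> leaves T then 1 / L else 0) u" .
    qed auto
    then show "psd_on (joint_space k (prot0 T)) (referee (prot0 T) s)"
      unfolding prot0_def L_def by (simp add: if_distrib cong: if_cong)
  next
    show "finite (leaves T)" by (rule finite_leaves)
  next
    fix s show "s \<notin> leaves T \<longrightarrow> (\<forall>a\<in>joint_space k (prot0 T). \<forall>b\<in>joint_space k (prot0 T). referee (prot0 T) s a b = 0)"
      unfolding prot0_def by simp
  next
    show "\<forall>a\<in>joint_space k (prot0 T). \<forall>b\<in>joint_space k (prot0 T).
      (\<Sum>s\<in>leaves T. referee (prot0 T) s a b) = (if a = b then 1 else 0)"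
      unfolding prot0_def using Lp unfolding L_def by simp
  qed
qed

lemma prot0_cost: "smp_cost k (prot0 T) = 0"
  unfolding smp_cost_def prot0_def by simp

lemma prot0_prob:
  assumes "s \<in> leaves T"
  shows "output_prob k (prot0 T) x s = 1 / real (card (leaves T))"
proof -
  have c1: "card (joint_space k (prot0 T)) = 1"
    unfolding joint_space_def prot0_def by (simp add: card_PiE)
  have js: "joint_state k (prot0 T) x a b = 1" for a b
    unfolding joint_state_def prot0_def by simp
  define JS where "JS = joint_space k (prot0 T)"
  have fJS: "finite JS" unfolding JS_def joint_space_def by (simp add: finite_PiE)
  have "(\<Sum>a\<in>JS. \<Sum>b\<in>JS. referee (prot0 T) s a b * joint_state k (prot0 T) x b a) =
     (\<Sum>a\<in>JS. complex_of_real (1 / real (card (leaves T))))"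
  proof (rule sum.cong[OF refl])
    fix a assume "a \<in> JS"
    have "(\<Sum>b\<in>JS. referee (prot0 T) s a b * joint_state k (prot0 T) x b a) =
        (\<Sum>b\<in>JS. if a = b then complex_of_real (1 / real (card (leaves T))) else 0)"
      unfolding js using assms by (intro sum.cong) (auto simp: prot0_def)
    also have "\<dots> = complex_of_real (1 / real (card (leaves T)))" using fJS \<open>a \<in> JS\<close> by simp
    finally show "(\<Sum>b\<in>JS. referee (prot0 T) s a b * joint_state k (prot0 T) x b a) =
       complex_of_real (1 / real (card (leaves T)))" .
  qed
  then have "output_prob k (prot0 T) x s = Re (\<Sum>a\<in>joint_space k (prot0 T). complex_of_real (1 / real (card (leaves T))))"
    unfolding output_prob_def JS_def by simp
  also have "\<dots> = 1 / real (card (leaves T))" using c1 by simp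
  finally show ?thesis .
qed

lemma quantum_branch:
  assumes n1: "n \<ge> 1" and m2: "m \<ge> 2" and K: "8 * n \<le> 2 ^ (m - 2)"
    and wf: "meq_wf k n T" and comp: "computes_tree k n T f"
  shows "\<exists>P :: 's smp_protocol. valid_smp k n P \<and> smp_cost k P = k * (m * R) \<and>
     (\<forall>x\<in>smp_inputs k n. 1 - 2 * real (meq_depth T) * sqrt ((5/8) ^ R) \<le> output_prob k P x (f x))"
proof -
  obtain c dec enc where "fp n m R c dec enc" using fp_exists[OF n1 m2 K] by blast
  then interpret fp n k m R c dec enc .
  show ?thesis
  proof (intro exI[of _ "prot T"] conjI ballI)
    show "valid_smp k n (prot T)" by (rule valid[OF wf])
    show "smp_cost k (prot T) = k * (m * R)" by (rule cost)
    fix x assume x: "x \<in> smp_inputs k n"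
    then have "f x = meq_eval T x" using comp unfolding computes_tree_def by simp
    then show "1 - 2 * real (meq_depth T) * sqrt ((5/8) ^ R) \<le> output_prob k (prot T) x (f x)"
      using success[OF wf x] by simp
  qed
qed

lemma ln2_ge: "ln (2::real) \<ge> 1/2"
  using ln_le_minus_one[of "1/2::real"] by (simp add: ln_div)

lemma bound_eps:
  fixes D :: nat and \<delta> L :: real and R' :: nat
  assumes D1: "D \<ge> 1" and d0: "0 < \<delta>" and d1: "\<delta> < 1" and L: "L = ln (real D) + ln (1 / \<delta>)"
    and L2: "L \<ge> ln 2" and R: "real R' \<ge> 6 * L"
  shows "2 * real D * (5/8) ^ R' \<le> \<delta>"
proof -
  have l58: "ln (5/8::real) \<le> - 3/8" using ln_le_minus_one[of "5/8::real"] by simp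
  have Lpos: "L > 0" using L2 by (smt (verit) ln_gt_zero one_less_numeral_iff semiring_norm(76))
  have "(5/8::real) ^ R' = exp (real R' * ln (5/8))"
    by (simp add: exp_of_nat_mult)
  also have "\<dots> \<le> exp (6 * L * ln (5/8))"
  proof -
    have "ln (5/8::real) < 0" by simp
    then have "real R' * ln (5/8) \<le> 6 * L * ln (5/8::real)" using R by (intro mult_right_mono_neg) auto
    then show ?thesis by simp
  qed
  also have "\<dots> \<le> exp (- L - 5/4 * L)"
  proof -
    have "6 * L * ln (5/8::real) \<le> 6 * L * (-3/8)" using l58 Lpos by (intro mult_left_mono) auto
    then show ?thesis by simp
  qed
  also have "\<dots> = exp (- L) * exp (- (5/4 * L))" by (simp add: exp_add[symmetric])
  also have "exp (- (5/4 * L)) \<le> exp (- ln 2)" using L2 Lpos by simp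
  also have "exp (- ln 2) = (1/2::real)" by (simp add: exp_minus)
  also have "exp (- L) = \<delta> / real D"
    using D1 d0 unfolding L by (simp add: exp_diff exp_minus ln_div)
  finally have "(5/8::real) ^ R' \<le> \<delta> / real D * (1/2)" by simp
  then show ?thesis using D1 by (simp add: field_simps)
qed

lemma bound_cost:
  fixes n :: nat and L :: real
  assumes n2: "n \<ge> 2" and L2: "L \<ge> ln 2"
  shows "real ((nat \<lceil>log 2 (real n)\<rceil> + 5) * (2 * nat \<lceil>6 * L\<rceil>)) \<le> 224 * L * ln (real n)"
proof -
  define p where "p = nat \<lceil>log 2 (real n)\<rceil>"
  define R' where "R' = nat \<lceil>6 * L\<rceil>"
  have l2: "ln (2::real) \<ge> 1/2" by (rule ln2_ge)
  have lg1: "log 2 (real n) \<ge> 1" using n2 by simp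
  have lnpos: "ln (real n) > 0" using n2 by simp
  have Lpos: "L \<ge> 1/2" using L2 l2 by linarith
  have "real p \<le> log 2 (real n) + 1" unfolding p_def using lg1 by linarith
  then have "real p + 5 \<le> 7 * log 2 (real n)" using lg1 by linarith
  also have "log 2 (real n) = ln (real n) / ln 2" by (simp add: log_def)
  also have "\<dots> \<le> 2 * ln (real n)"
    using l2 lnpos by (simp add: divide_le_eq)
  finally have pm: "real p + 5 \<le> 14 * ln (real n)" by simp
  have "real R' \<le> 6 * L + 1" unfolding R'_def using Lpos by linarith
  then have Rm: "2 * real R' \<le> 16 * L" using Lpos by linarith
  have "real ((p + 5) * (2 * R')) = (real p + 5) * (2 * real R')" by simp
  also have "\<dots> \<le> (14 * ln (real n)) * (16 * L)"
    by (rule mult_mono[OF pm Rm]) (use lnpos in auto)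
  also have "\<dots> = 224 * L * ln (real n)" by simp
  finally show ?thesis unfolding p_def R'_def .
qed

theorem theorem2:
  shows "\<exists>C::real. \<forall>(n::nat) (k::nat) (D::nat) (\<delta>::real) (T::'s meq_tree) (f::(nat \<Rightarrow> bits) \<Rightarrow> 's).
    2 \<le> n \<longrightarrow> 1 \<le> k \<longrightarrow> 1 \<le> D \<longrightarrow> 0 < \<delta> \<longrightarrow> \<delta> < 1 \<longrightarrow>
    meq_wf k n T \<longrightarrow> meq_depth T = D \<longrightarrow> computes_tree k n T f \<longrightarrow>
    (\<exists>P :: 's smp_protocol.
       valid_smp k n P \<and>
       real (smp_cost k P) \<le> C * real k * (ln (real D) + ln (1 / \<delta>)) * ln (real n) \<and>
       (\<forall>x\<in>smp_inputs k n. 1 - \<delta> \<le> output_prob k P x (f x)))"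
proof (intro exI[of _ 224] allI impI)
  fix n k D :: nat and \<delta> :: real and T :: "'s meq_tree" and f :: "(nat \<Rightarrow> bits) \<Rightarrow> 's"
  assume n2: "2 \<le> n" and k1: "1 \<le> k" and D1: "1 \<le> D" and d0: "0 < \<delta>" and d1: "\<delta> < 1"
    and wf: "meq_wf k n T" and dep: "meq_depth T = D" and comp: "computes_tree k n T f"
  define L where "L = ln (real D) + ln (1 / \<delta>)"
  have lnD: "ln (real D) \<ge> 0" using D1 by simp
  have lnd: "ln (1 / \<delta>) > 0" using d0 d1 by simp
  have lnn: "ln (real n) > 0" using n2 by simp
  have L0: "L \<ge> 0" unfolding L_def using lnD lnd by simp
  show "\<exists>P :: 's smp_protocol. valid_smp k n P \<and>
       real (smp_cost k P) \<le> 224 * real k * (ln (real D) + ln (1 / \<delta>)) * ln (real n) \<and>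
       (\<forall>x\<in>smp_inputs k n. 1 - \<delta> \<le> output_prob k P x (f x))"
  proof (cases "D = 1 \<and> \<delta> \<ge> 1/2")
    case True
    show ?thesis
    proof (intro exI[of _ "prot0 T"] conjI ballI)
      show "valid_smp k n (prot0 T)" by (rule prot0_valid)
      show "real (smp_cost k (prot0 T)) \<le> 224 * real k * (ln (real D) + ln (1 / \<delta>)) * ln (real n)"
        using L0 lnn unfolding prot0_cost L_def by simp
      fix x assume x: "x \<in> smp_inputs k n"
      have fx: "f x \<in> leaves T" using comp x eval_leaves unfolding computes_tree_def by metis
      have c2: "card (leaves T) \<le> 2" using depth1_card dep True by simp
      have cp: "card (leaves T) > 0" using leaves_ne[of T] finite_leaves[of T] by (simp add: card_gt_0_iff)
      have "1 - \<delta> \<le> 1 / 2" using True by simp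
      also have "\<dots> \<le> 1 / real (card (leaves T))" using c2 cp by (simp add: divide_le_eq)
      finally show "1 - \<delta> \<le> output_prob k (prot0 T) x (f x)" using prot0_prob[OF fx] by simp
    qed
  next
    case False
    have L2: "L \<ge> ln 2"
    proof (cases "D = 1")
      case True
      then have "\<delta> < 1/2" using False by simp
      then have "ln 2 < ln (1 / \<delta>)" using d0 by (simp add: field_simps)
      then show ?thesis unfolding L_def using lnD by simp
    next
      case False
      then have "ln 2 \<le> ln (real D)" using D1 by simp
      then show ?thesis unfolding L_def using lnd by simp
    qed
    define p where "p = nat \<lceil>log 2 (real n)\<rceil>"
    define R' where "R' = nat \<lceil>6 * L\<rceil>"
    define m where "m = p + 5"
    have np: "n \<le> 2 ^ p"
    proof -
      have "real n = 2 powr (log 2 (real n))" using n2 by simp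
      also have "\<dots> \<le> 2 powr (real p)" unfolding p_def by (intro powr_mono) linarith+
      also have "\<dots> = real (2 ^ p)" by (simp add: powr_realpow)
      finally show ?thesis by linarith
    qed
    have K: "8 * n \<le> 2 ^ (m - 2)" unfolding m_def using np by (simp add: power_add)
    obtain P :: "'s smp_protocol" where Pv: "valid_smp k n P" and Pc: "smp_cost k P = k * (m * (2 * R'))"
      and Pp: "\<forall>x\<in>smp_inputs k n. 1 - 2 * real (meq_depth T) * sqrt ((5/8) ^ (2 * R')) \<le> output_prob k P x (f x)"
      using quantum_branch[OF _ _ K wf comp, of "2 * R'"] n2 unfolding m_def by auto
    show ?thesis
    proof (intro exI[of _ P] conjI ballI)
      show "valid_smp k n P" by (rule Pv)
      have "real (m * (2 * R')) \<le> 224 * L * ln (real n)"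
        unfolding m_def p_def R'_def by (rule bound_cost[OF n2 L2])
      then have "real k * real (m * (2 * R')) \<le> real k * (224 * L * ln (real n))"
        by (intro mult_left_mono) auto
      then show "real (smp_cost k P) \<le> 224 * real k * (ln (real D) + ln (1 / \<delta>)) * ln (real n)"
        unfolding Pc L_def by (simp add: algebra_simps)
      fix x assume x: "x \<in> smp_inputs k n"
      have sq: "sqrt ((5/8::real) ^ (2 * R')) = (5/8) ^ R'"
      proof -
        have "(5/8::real) ^ (2 * R') = ((5/8) ^ R')\<^sup>2" by (simp add: power_mult[symmetric] mult.commute)
        then show ?thesis by simp
      qed
      have "2 * real D * (5/8) ^ R' \<le> \<delta>"
        by (rule bound_eps[OF D1 d0 d1 L_def L2]) (simp add: R'_def; linarith)
      then show "1 - \<delta> \<le> output_prob k P x (f x)" using Pp x sq dep by fastforce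
    qed
  qed
qed

end
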